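(* Let $p$ be a prime, $\tau>0$, $r_E=r_I=0$. Let $S_E,S_I:\mathbb{R}\to\mathbb{R}$ be bounded Lipschitz functions with $S_E(0)=S_I(0)=0$, let $w_{EE},w_{EI},w_{IE},w_{II}\in\mathcal{C}(\mathbb{Z}_p)$ and $h_E,h_I\in\mathcal{C}([0,\infty),\mathcal{C}(\mathbb{Z}_p))$. Let $\mathcal{X}=\mathcal{C}(\mathbb{Z}_p)\times\mathcal{C}(\mathbb{Z}_p)$ with norm $\|(f_1,f_2)\|=\max\{\|f_1\|_\infty,\|f_2\|_\infty\}$ and, for $f=(f_1,f_2)\in\mathcal{X}$ and $s\ge0$, $$\boldsymbol{H}(f,s)=\Big(S_E\big(w_{EE}\ast f_1-w_{EI}\ast f_2+h_E(\cdot,s)\big),\ S_I\big(w_{IE}\ast f_1-w_{II}\ast f_2+h_I(\cdot,s)\big)\Big).$$ Let $(E_0,I_0)\in\mathcal{X}$ and let $u(t)=(E(\cdot,t),I(\cdot,t))\in\mathcal{C}^1([0,\infty),\mathcal{X})$ be the unique solution of $$\partial_tu+\tfrac1\tau u=\tfrac1\tau\boldsymbol{H}(u,t),\qquad u(0)=(E_0,I_0).$$ For $l\ge1$ let $u_l(t)=(E_l(\cdot,t),I_l(\cdot,t))$ be the unique solution in $\mathcal{C}^1([0,\infty),\mathcal{X}_l)$ of the discretized problem $$\partial_tu_l+\tfrac1\tau u_l=\tfrac1\tau\boldsymbol{P}_l\big(\boldsymbol{H}(u_l,t)\big),\qquad u_l(0)=\boldsymbol{P}_l(E_0,I_0).$$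 Then for every $T\in(0,\infty)$, $$\lim_{l\to\infty}\sup_{0\le t\le T}\|u_l(t)-u(t)\|=0.$$
   Context: $\mathbb{Z}_p$ is the ring of $p$-adic integers with $p$-adic absolute value $|\cdot|_p$; it is a compact Abelian group and $dx$ is its Haar measure normalized by $\int_{\mathbb{Z}_p}dx=1$. $\mathcal{C}(\mathbb{Z}_p)$ is the space of real-valued continuous functions on $\mathbb{Z}_p$ with sup norm $\|\cdot\|_\infty$. Convolution: $(w\ast f)(x)=\int_{\mathbb{Z}_p}w(x-y)f(y)\,dx(y)$. $\Omega(p^l|x-a|_p)$ denotes the characteristic function of the ball $a+p^l\mathbb{Z}_p$. $G_l=\{i_0+i_1p+\dots+i_{l-1}p^{l-1}:i_j\in\{0,\dots,p-1\}\}$ is a set of representatives of $\mathbb{Z}_p/p^l\mathbb{Z}_p$. $\mathcal{D}^l(\mathbb{Z}_p)$ is the finite-dimensional space of functions $\sum_{i\in G_l}\varphi(i)\Omega(p^l|x-i|_p)$, $\varphi(i)\in\mathbb{R}$, and $\mathcal{X}_l=\mathcal{D}^l(\mathbb{Z}_p)\times\mathcal{D}^l(\mathbb{Z}_p)\subset\mathcal{X}$ with the same norm. The operator $\boldsymbol{P}_l:\mathcal{X}\to\mathcal{X}_l$ acts componentwise by $(\boldsymbol{P}_lf)(x)=\sum_{i\in G_l}f(i)\,\Omega(p^l|x-i|_p)$. *)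

theory Defs
  imports "HOL-Analysis.Analysis" "HOL-Computational_Algebra.Primes"
begin

text \<open>An element x of Z_p is represented by the sequence of its residues
  x n = x mod p^n in {0..<p^n}, with x n = (x (Suc n)) mod p^n.\<close>

type_synonym zp = "nat \<Rightarrow> int"
type_synonym zfun = "zp \<Rightarrow> real"

definition Zp :: "nat \<Rightarrow> zp set" where
  "Zp p = {x. \<forall>n. 0 \<le> x n \<and> x n < int p ^ n \<and> x n = x (Suc n) mod (int p ^ n)}"

definition zp_of_int :: "nat \<Rightarrow> int \<Rightarrow> zp" where
  "zp_of_int p a = (\<lambda>n. a mod (int p ^ n))"

definition zp_zero :: zp where
  "zp_zero = (\<lambda>n. 0)"

definition zp_sub :: "nat \<Rightarrow> zp \<Rightarrow> zp \<Rightarrow> zp" where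
  "zp_sub p x y = (\<lambda>n. (x n - y n) mod (int p ^ n))"

text \<open>p-adic absolute value: |x|_p = p^(-v) where v is the largest n with x in p^n Z_p.\<close>
definition zp_abs :: "nat \<Rightarrow> zp \<Rightarrow> real" where
  "zp_abs p x = (if x = zp_zero then 0 else inverse (real p ^ (LEAST n. x (Suc n) \<noteq> 0)))"

definition Omega_ball :: "nat \<Rightarrow> nat \<Rightarrow> zp \<Rightarrow> zp \<Rightarrow> real" where
  "Omega_ball p l a x = (if real p ^ l * zp_abs p (zp_sub p x a) \<le> 1 then 1 else 0)"

definition Gl :: "nat \<Rightarrow> nat \<Rightarrow> int set" where
  "Gl p l = {0..<int p ^ l}"

definition zp_continuous :: "nat \<Rightarrow> zfun \<Rightarrow> bool" where
  "zp_continuous p f \<longleftrightarrow> (\<forall>x\<in>Zp p. \<forall>e>0. \<exists>d>0. \<forall>y\<in>Zp p.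
      zp_abs p (zp_sub p x y) < d \<longrightarrow> \<bar>f y - f x\<bar> < e)"

definition supn :: "nat \<Rightarrow> zfun \<Rightarrow> real" where
  "supn p f = (SUP x\<in>Zp p. \<bar>f x\<bar>)"

text \<open>Normalized Haar integral of a continuous function on Z_p, as the limit of
  the Riemann sums over the balls i + p^l Z_p (each of Haar measure p^(-l)).\<close>
definition haar_int :: "nat \<Rightarrow> zfun \<Rightarrow> real" where
  "haar_int p f = lim (\<lambda>l. (\<Sum>i\<in>Gl p l. f (zp_of_int p i)) / real p ^ l)"

definition conv :: "nat \<Rightarrow> zfun \<Rightarrow> zfun \<Rightarrow> zfun" where
  "conv p w f = (\<lambda>x. haar_int p (\<lambda>y. w (zp_sub p x y) * f y))"

type_synonym xel = "zfun \<times> zfun"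

definition in_X :: "nat \<Rightarrow> xel \<Rightarrow> bool" where
  "in_X p f \<longleftrightarrow> zp_continuous p (fst f) \<and> zp_continuous p (snd f)"

definition Xnorm :: "nat \<Rightarrow> xel \<Rightarrow> real" where
  "Xnorm p f = max (supn p (fst f)) (supn p (snd f))"

definition Xsub :: "xel \<Rightarrow> xel \<Rightarrow> xel" where
  "Xsub f g = ((\<lambda>x. fst f x - fst g x), (\<lambda>x. snd f x - snd g x))"

definition in_Dl :: "nat \<Rightarrow> nat \<Rightarrow> zfun \<Rightarrow> bool" where
  "in_Dl p l f \<longleftrightarrow> (\<exists>\<phi>::int \<Rightarrow> real. \<forall>x\<in>Zp p. f x = (\<Sum>i\<in>Gl p l. \<phi> i * Omega_ball p l (zp_of_int p i) x))"

definition in_Xl :: "nat \<Rightarrow> nat \<Rightarrow> xel \<Rightarrow> bool" where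
  "in_Xl p l f \<longleftrightarrow> in_Dl p l (fst f) \<and> in_Dl p l (snd f)"

definition Pl1 :: "nat \<Rightarrow> nat \<Rightarrow> zfun \<Rightarrow> zfun" where
  "Pl1 p l f = (\<lambda>x. \<Sum>i\<in>Gl p l. f (zp_of_int p i) * Omega_ball p l (zp_of_int p i) x)"

definition Pl :: "nat \<Rightarrow> nat \<Rightarrow> xel \<Rightarrow> xel" where
  "Pl p l f = (Pl1 p l (fst f), Pl1 p l (snd f))"

definition cont_time_fun :: "nat \<Rightarrow> (real \<Rightarrow> zfun) \<Rightarrow> bool" where
  "cont_time_fun p h \<longleftrightarrow> (\<forall>s\<ge>0. zp_continuous p (h s)) \<and>
     (\<forall>s\<ge>0. ((\<lambda>s'. supn p (\<lambda>x. h s' x - h s x)) \<longlongrightarrow> 0) (at s within {0..}))"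

definition Hop :: "nat \<Rightarrow> (real \<Rightarrow> real) \<Rightarrow> (real \<Rightarrow> real) \<Rightarrow> zfun \<Rightarrow> zfun \<Rightarrow> zfun \<Rightarrow> zfun
    \<Rightarrow> (real \<Rightarrow> zfun) \<Rightarrow> (real \<Rightarrow> zfun) \<Rightarrow> xel \<Rightarrow> real \<Rightarrow> xel" where
  "Hop p SE SI wEE wEI wIE wII hE hI f s =
     ((\<lambda>x. SE (conv p wEE (fst f) x - conv p wEI (snd f) x + hE s x)),
      (\<lambda>x. SI (conv p wIE (fst f) x - conv p wII (snd f) x + hI s x)))"

text \<open>u is a C^1([0,\<infinity>), X) solution of  u' + u/\<tau> = G(u,t)/\<tau>, u(0) = u0
  (derivatives taken in the norm of X, one-sided at t = 0; equalities in X,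
  i.e. pointwise on Z_p).\<close>
definition is_C1_solution :: "nat \<Rightarrow> real \<Rightarrow> (xel \<Rightarrow> real \<Rightarrow> xel) \<Rightarrow> xel \<Rightarrow> (real \<Rightarrow> xel) \<Rightarrow> bool" where
  "is_C1_solution p \<tau> G u0 u \<longleftrightarrow>
     (\<forall>t\<ge>0. in_X p (u t)) \<and>
     (\<exists>u'. (\<forall>t\<ge>0. in_X p (u' t)) \<and>
        (\<forall>t\<ge>0. ((\<lambda>s. Xnorm p (Xsub (((\<lambda>x. (fst (u s) x - fst (u t) x) / (s - t)),
                                        (\<lambda>x. (snd (u s) x - snd (u t) x) / (s - t))))
                                   (u' t))) \<longlongrightarrow> 0) (at t within {0..})) \<and>
        (\<forall>t\<ge>0. ((\<lambda>s. Xnorm p (Xsub (u' s) (u' t))) \<longlongrightarrow> 0) (at t within {0..})) \<and>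
        (\<forall>t\<ge>0. \<forall>x\<in>Zp p.
            fst (u' t) x + fst (u t) x / \<tau> = fst (G (u t) t) x / \<tau> \<and>
            snd (u' t) x + snd (u t) x / \<tau> = snd (G (u t) t) x / \<tau>)) \<and>
     (\<forall>x\<in>Zp p. fst (u 0) x = fst u0 x \<and> snd (u 0) x = snd u0 x)"

end

theory Submission
  imports Defs
begin


lemma zpD: "x \<in> Zp p \<Longrightarrow> 0 \<le> x n \<and> x n < int p ^ n \<and> x n = x (Suc n) mod (int p ^ n)"
  unfolding Zp_def by blast

lemma zp_lower: assumes "p > 0" "x \<in> Zp p" "n \<le> k" shows "x n = x k mod (int p ^ n)"
  using assms(3)
proof (induction k)
  case 0 then show ?case using zpD[OF assms(2), of 0] by simp
next
  case (Suc k)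
  show ?case
  proof (cases "n = Suc k")
    case True
    then show ?thesis using zpD[OF assms(2), of n] by simp
  next
    case False
    then have "n \<le> k" using Suc by simp
    then have "x n = x k mod (int p ^ n)" using Suc by simp
    also have "x k = x (Suc k) mod (int p ^ k)" using zpD[OF assms(2)] by blast
    also have "x (Suc k) mod (int p ^ k) mod (int p ^ n) = x (Suc k) mod (int p ^ n)"
      by (rule mod_mod_cancel) (simp add: \<open>n \<le> k\<close> le_imp_power_dvd)
    finally show ?thesis .
  qed
qed

lemma zp_agree_lower: assumes "p > 0" "x \<in> Zp p" "y \<in> Zp p" "x k = y k" "n \<le> k"
  shows "x n = y n"
  using zp_lower[OF assms(1,2,5)] zp_lower[OF assms(1,3,5)] assms(4) by simp

lemma zp_of_int_in: assumes "p > 0" shows "zp_of_int p i \<in> Zp p"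
  unfolding Zp_def zp_of_int_def using assms
  by (auto simp: mod_mod_cancel)

lemma zp_sub_in: assumes p0: "p > 0" and "x \<in> Zp p" "y \<in> Zp p" shows "zp_sub p x y \<in> Zp p"
proof -
  have "(x n - y n) mod int p ^ n = ((x (Suc n) - y (Suc n)) mod int p ^ Suc n) mod int p ^ n" for n
  proof -
    have "((x (Suc n) - y (Suc n)) mod int p ^ Suc n) mod int p ^ n = (x (Suc n) - y (Suc n)) mod int p ^ n"
      by (rule mod_mod_cancel) (simp add: le_imp_power_dvd)
    also have "\<dots> = (x (Suc n) mod int p ^ n - y (Suc n) mod int p ^ n) mod int p ^ n"
      by (simp add: mod_diff_eq)
    also have "\<dots> = (x n - y n) mod int p ^ n" using zpD[OF assms(2), of n] zpD[OF assms(3), of n] by simp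
    finally show ?thesis by simp
  qed
  note h = this
  show ?thesis unfolding Zp_def
  proof (intro CollectI allI conjI)
    fix n
    show "0 \<le> zp_sub p x y n" "zp_sub p x y n < int p ^ n" using p0 by (simp_all add: zp_sub_def)
    show "zp_sub p x y n = zp_sub p x y (Suc n) mod int p ^ n"
      unfolding zp_sub_def by (rule h)
  qed
qed

lemma zp_zero_in: assumes "p > 0" shows "zp_zero \<in> Zp p"
  unfolding Zp_def zp_zero_def using assms by auto

lemma zp_eq_mod0: assumes "x \<in> Zp p" "y \<in> Zp p" "(x n - y n) mod (int p ^ n) = 0" shows "x n = y n"
proof -
  have a: "0 \<le> x n" "x n < int p ^ n" "0 \<le> y n" "y n < int p ^ n" using zpD assms by blast+
  from assms(3) obtain k where k: "x n - y n = int p ^ n * k" by (auto simp: dvd_def mod_eq_0_iff_dvd)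
  have "k = 0"
  proof (rule ccontr)
    assume "k \<noteq> 0"
    then have "\<bar>int p ^ n * k\<bar> \<ge> int p ^ n" using a
      by (simp add: abs_mult) (smt (verit) mult_le_cancel_left1)
    then show False using k a by linarith
  qed
  then show ?thesis using k by simp
qed

lemma zp_abs_le_iff: assumes "p > 1" "x \<in> Zp p" "y \<in> Zp p"
  shows "zp_abs p (zp_sub p x y) \<le> inverse (real p ^ m) \<longleftrightarrow> x m = y m"
proof -
  let ?z = "zp_sub p x y"
  have p0: "p > 0" using assms by simp
  have zz: "?z n = 0 \<longleftrightarrow> x n = y n" for n
    using zp_eq_mod0[OF assms(2,3), of n] by (auto simp: zp_sub_def)
  show ?thesis
  proof (cases "?z = zp_zero")
    case True
    then have "?z m = 0" by (simp add: zp_zero_def)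
    then show ?thesis using True zz by (simp add: zp_abs_def)
  next
    case False
    then obtain n where n: "?z n \<noteq> 0" by (auto simp: zp_zero_def)
    have "?z 0 = 0" by (simp add: zp_sub_def)
    with n obtain n' where n': "?z (Suc n') \<noteq> 0" by (cases n) auto
    define v where "v = (LEAST n. ?z (Suc n) \<noteq> 0)"
    have v1: "?z (Suc v) \<noteq> 0" unfolding v_def by (rule LeastI[of _ n'], rule n')
    have v2: "k < v \<Longrightarrow> ?z (Suc k) = 0" for k unfolding v_def using not_less_Least by blast
    have abs: "zp_abs p ?z = inverse (real p ^ v)" using False by (simp add: zp_abs_def v_def)
    have "inverse (real p ^ v) \<le> inverse (real p ^ m) \<longleftrightarrow> m \<le> v"
      using assms(1) by (simp add: le_imp_inverse_le power_increasing_iff)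
    also have "m \<le> v \<longleftrightarrow> x m = y m"
    proof
      assume "m \<le> v"
      show "x m = y m"
      proof (cases m)
        case 0 then show ?thesis using zpD[OF assms(2), of 0] zpD[OF assms(3), of 0] by simp
      next
        case (Suc k) then show ?thesis using v2[of k] \<open>m \<le> v\<close> zz by simp
      qed
    next
      assume "x m = y m"
      show "m \<le> v"
      proof (rule ccontr)
        assume "\<not> m \<le> v"
        then have "Suc v \<le> m" by simp
        then have "x (Suc v) = y (Suc v)" using zp_agree_lower[OF p0 assms(2,3) \<open>x m = y m\<close>] by blast
        then show False using v1 zz by simp
      qed
    qed
    finally show ?thesis using abs by simp
  qed
qed



lemma Omega_eval: assumes "p > 1" "x \<in> Zp p" "y \<in> Zp p"
  shows "Omega_ball p l y x = (if x l = y l then 1 else 0)"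
proof -
  have pp: "real p ^ l > 0" using assms(1) by simp
  have "real p ^ l * zp_abs p (zp_sub p x y) \<le> 1 \<longleftrightarrow> zp_abs p (zp_sub p x y) \<le> inverse (real p ^ l)"
    using pp by (simp add: field_simps)
  then show ?thesis using zp_abs_le_iff[OF assms, of l] by (simp add: Omega_ball_def)
qed

lemma zoi_level: assumes "p > 0" "0 \<le> i" "i < int p ^ l" shows "zp_of_int p i l = i"
  using assms by (simp add: zp_of_int_def)

lemma Pl1_eval: assumes "p > 1" "x \<in> Zp p" shows "Pl1 p l f x = f (zp_of_int p (x l))"
proof -
  have p0: "p > 0" using assms by simp
  have "Pl1 p l f x = (\<Sum>i\<in>Gl p l. if i = x l then f (zp_of_int p i) else 0)"
    unfolding Pl1_def
  proof (rule sum.cong[OF refl])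
    fix i assume "i \<in> Gl p l"
    then have i: "0 \<le> i" "i < int p ^ l" by (auto simp: Gl_def)
    show "f (zp_of_int p i) * Omega_ball p l (zp_of_int p i) x = (if i = x l then f (zp_of_int p i) else 0)"
      using Omega_eval[OF assms(1,2) zp_of_int_in[OF p0]] zoi_level[OF p0 i] by auto
  qed
  also have "\<dots> = f (zp_of_int p (x l))"
    using zpD[OF assms(2), of l] by (simp add: Gl_def)
  finally show ?thesis .
qed

lemma zoi_agree: assumes "p > 0" "x \<in> Zp p" "m \<le> l" shows "zp_of_int p (x l) m = x m"
  using zp_lower[OF assms] by (simp add: zp_of_int_def)

definition lcont :: "nat \<Rightarrow> zfun \<Rightarrow> bool" where
  "lcont p f \<longleftrightarrow> (\<forall>x\<in>Zp p. \<forall>e>0. \<exists>m. \<forall>y\<in>Zp p. y m = x m \<longrightarrow> \<bar>f y - f x\<bar> < e)"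

definition uc :: "nat \<Rightarrow> zfun \<Rightarrow> bool" where
  "uc p f \<longleftrightarrow> (\<forall>e>0. \<exists>m. \<forall>x\<in>Zp p. \<forall>y\<in>Zp p. x m = y m \<longrightarrow> \<bar>f x - f y\<bar> < e)"

definition bnd :: "nat \<Rightarrow> zfun \<Rightarrow> bool" where
  "bnd p f \<longleftrightarrow> (\<exists>M. \<forall>x\<in>Zp p. \<bar>f x\<bar> \<le> M)"

lemma lcont_of_cont: assumes "p > 1" "zp_continuous p f" shows "lcont p f"
  unfolding lcont_def
proof (intro ballI allI impI)
  fix x e assume x: "x \<in> Zp p" and e: "(e::real) > 0"
  obtain d where d: "d > 0" "\<forall>y\<in>Zp p. zp_abs p (zp_sub p x y) < d \<longrightarrow> \<bar>f y - f x\<bar> < e"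
    using assms(2) x e unfolding zp_continuous_def by blast
  have "inverse (real p) < 1" using assms(1) by (simp add: inverse_less_1_iff)
  moreover have "inverse (real p) > 0" using assms(1) by simp
  ultimately obtain m where m: "inverse (real p) ^ m < d" using real_arch_pow_inv d(1) by blast
  show "\<exists>m. \<forall>y\<in>Zp p. y m = x m \<longrightarrow> \<bar>f y - f x\<bar> < e"
  proof (intro exI ballI impI)
    fix y assume y: "y \<in> Zp p" "y m = x m"
    have "zp_abs p (zp_sub p x y) \<le> inverse (real p ^ m)"
      using zp_abs_le_iff[OF assms(1) x y(1)] y(2) by simp
    also have "\<dots> < d" using m by (simp add: power_inverse)
    finally show "\<bar>f y - f x\<bar> < e" using d(2) y(1) by blast
  qed
qed

lemma infinite_UN_finite: assumes "finite I" "infinite (\<Union>i\<in>I. S i)" shows "\<exists>i\<in>I. infinite (S i)"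
  using assms by blast

lemma koenig: fixes xs :: "nat \<Rightarrow> zp" assumes p0: "p > 0" and xs: "\<And>k. xs k \<in> Zp p"
  shows "\<exists>z\<in>Zp p. \<forall>n. infinite {k. xs k n = z n}"
proof -
  define Q where "Q n an b \<longleftrightarrow> 0 \<le> b \<and> b < int p ^ Suc n \<and> infinite {k. xs k n = an \<and> xs k (Suc n) = b}" for n an b
  define a where "a = rec_nat 0 (\<lambda>n an. SOME b. Q n an b)"
  have a0: "a 0 = 0" by (simp add: a_def)
  have aS: "a (Suc n) = (SOME b. Q n (a n) b)" for n by (simp add: a_def)
  have step: "\<exists>b. Q n an b" if inf: "infinite {k. xs k n = an}" for n an
  proof -
    have "{k. xs k n = an} = (\<Union>b\<in>{0..<int p ^ Suc n}. {k. xs k n = an \<and> xs k (Suc n) = b})"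
    proof -
      have r: "\<And>k. 0 \<le> xs k (Suc n) \<and> xs k (Suc n) < int p ^ Suc n" using zpD[OF xs] by blast
      show ?thesis using r by auto
    qed
    then have "infinite (\<Union>b\<in>{0..<int p ^ Suc n}. {k. xs k n = an \<and> xs k (Suc n) = b})" using inf by simp
    then obtain b where "b \<in> {0..<int p ^ Suc n}" "infinite {k. xs k n = an \<and> xs k (Suc n) = b}"
      using infinite_UN_finite[of "{0..<int p ^ Suc n}"] by blast
    then show ?thesis unfolding Q_def by auto
  qed
  have inv: "infinite {k. xs k n = a n}" for n
  proof (induction n)
    case 0
    have r: "\<And>k. 0 \<le> xs k 0 \<and> xs k 0 < int p ^ 0" using zpD[OF xs] by blast
    have "xs k 0 = 0" for k using r[of k] by simp
    then have "{k. xs k 0 = a 0} = UNIV" using a0 by simp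
    then show ?case using infinite_UNIV_nat by simp
  next
    case (Suc n)
    have "Q n (a n) (a (Suc n))" unfolding aS using step[OF Suc] by (rule someI_ex)
    then have "infinite {k. xs k n = a n \<and> xs k (Suc n) = a (Suc n)}" unfolding Q_def by blast
    then show ?case by (rule infinite_super[rotated]) auto
  qed
  have Qn: "Q n (a n) (a (Suc n))" for n unfolding aS using step[OF inv] by (rule someI_ex)
  have "a \<in> Zp p" unfolding Zp_def
  proof (intro CollectI allI)
    fix n
    show "0 \<le> a n \<and> a n < int p ^ n \<and> a n = a (Suc n) mod int p ^ n"
    proof (intro conjI)
      show "0 \<le> a n" "a n < int p ^ n"
      proof -
        have "0 \<le> a n \<and> a n < int p ^ n"
        proof (cases n)
          case 0 then show ?thesis using a0 by simp
        next
          case (Suc k) then show ?thesis using Qn[of k] unfolding Q_def by simp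
        qed
        then show "0 \<le> a n" "a n < int p ^ n" by auto
      qed
      have "infinite {k. xs k n = a n \<and> xs k (Suc n) = a (Suc n)}" using Qn[of n] unfolding Q_def by blast
      then obtain k where "xs k n = a n" "xs k (Suc n) = a (Suc n)" using not_finite_existsD by blast
      then show "a n = a (Suc n) mod int p ^ n" using zpD[OF xs, of k n] by simp
    qed
  qed
  then show ?thesis using inv by blast
qed

lemma uc_of_lcont: assumes p0: "p > 0" and "lcont p f" shows "uc p f"
  unfolding uc_def
proof (rule ccontr)
  assume "\<not> (\<forall>e>0. \<exists>m. \<forall>x\<in>Zp p. \<forall>y\<in>Zp p. x m = y m \<longrightarrow> \<bar>f x - f y\<bar> < e)"
  then obtain e where e: "e > 0" "\<forall>m. \<exists>x\<in>Zp p. \<exists>y\<in>Zp p. x m = y m \<and> \<bar>f x - f y\<bar> \<ge> e"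
    by (auto simp: not_less)
  then have "\<forall>m. \<exists>q. fst q \<in> Zp p \<and> snd q \<in> Zp p \<and> fst q m = snd q m \<and> \<bar>f (fst q) - f (snd q)\<bar> \<ge> e"
    by fastforce
  then have "\<exists>Q. \<forall>m. fst (Q m) \<in> Zp p \<and> snd (Q m) \<in> Zp p \<and> fst (Q m) m = snd (Q m) m \<and> \<bar>f (fst (Q m)) - f (snd (Q m))\<bar> \<ge> e"
    by (rule choice)
  then obtain Q where Q: "\<forall>m. fst (Q m) \<in> Zp p \<and> snd (Q m) \<in> Zp p \<and> fst (Q m) m = snd (Q m) m \<and> \<bar>f (fst (Q m)) - f (snd (Q m))\<bar> \<ge> e"
    by blast
  define xs where "xs m = fst (Q m)" for m
  define ys where "ys m = snd (Q m)" for m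
  have xy: "\<And>m. xs m \<in> Zp p" "\<And>m. ys m \<in> Zp p" "\<And>m. xs m m = ys m m"
     "\<And>m. \<bar>f (xs m) - f (ys m)\<bar> \<ge> e"
    unfolding xs_def ys_def using Q by auto
  have "\<exists>z\<in>Zp p. \<forall>n. infinite {k. xs k n = z n}" by (rule koenig[OF p0]) (rule xy(1))
  then obtain z where z: "z \<in> Zp p" "\<And>n. infinite {k. xs k n = z n}" by blast
  have e2: "e/2 > 0" using e(1) by simp
  obtain m where m: "\<forall>y\<in>Zp p. y m = z m \<longrightarrow> \<bar>f y - f z\<bar> < e/2"
    using assms(2) z(1) e2 unfolding lcont_def by blast
  obtain k where k: "k \<ge> m" "xs k m = z m"
  proof -
    have "infinite {k. xs k m = z m}" by (rule z(2))
    then obtain k where "k \<in> {k. xs k m = z m}" "k \<ge> m"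
      using infinite_nat_iff_unbounded_le by blast
    then show ?thesis using that by blast
  qed
  have "ys k m = xs k m" using zp_agree_lower[OF p0 xy(1) xy(2) xy(3) k(1)] by simp
  then have "\<bar>f (xs k) - f z\<bar> < e/2" "\<bar>f (ys k) - f z\<bar> < e/2" using m xy k by auto
  then show False using xy(4)[of k] by linarith
qed

lemma lcont_of_uc: assumes "uc p f" shows "lcont p f"
  unfolding lcont_def
proof (intro ballI allI impI)
  fix x e assume x: "x \<in> Zp p" and e: "(e::real) > 0"
  obtain m where m: "\<forall>x\<in>Zp p. \<forall>y\<in>Zp p. x m = y m \<longrightarrow> \<bar>f x - f y\<bar> < e"
    using assms e unfolding uc_def by blast
  show "\<exists>m. \<forall>y\<in>Zp p. y m = x m \<longrightarrow> \<bar>f y - f x\<bar> < e"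
    using m x by blast
qed

lemma bnd_of_uc: assumes p0: "p > 0" and "uc p f" shows "bnd p f"
proof -
  obtain m where m: "\<forall>x\<in>Zp p. \<forall>y\<in>Zp p. x m = y m \<longrightarrow> \<bar>f x - f y\<bar> < 1"
    using assms(2) zero_less_one unfolding uc_def by blast
  define M where "M = Max ((\<lambda>i. \<bar>f (zp_of_int p i)\<bar>) ` {0..<int p ^ m})"
  have "\<bar>f x\<bar> \<le> M + 1" if x: "x \<in> Zp p" for x
  proof -
    have "x m \<in> {0..<int p ^ m}" using zpD[OF x, of m] by auto
    then have "\<bar>f (zp_of_int p (x m))\<bar> \<le> M" unfolding M_def by (intro Max_ge) auto
    moreover have "zp_of_int p (x m) m = x m" using zoi_agree[OF p0 x, of m m] by simp
    then have "\<bar>f (zp_of_int p (x m)) - f x\<bar> < 1" using m x zp_of_int_in[OF p0] by blast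
    ultimately show ?thesis by linarith
  qed
  then show ?thesis unfolding bnd_def by blast
qed



definition R :: "nat \<Rightarrow> zfun \<Rightarrow> nat \<Rightarrow> real" where
  "R p g l = (\<Sum>n<p ^ l. g (zp_of_int p (int n))) / real p ^ l"

lemma int_image_lessThan: "{0..<int N} = int ` {..<N}"
proof (rule set_eqI)
  fix i :: int
  show "i \<in> {0..<int N} \<longleftrightarrow> i \<in> int ` {..<N}"
  proof
    assume "i \<in> {0..<int N}"
    then have "i = int (nat i)" "nat i \<in> {..<N}" by auto
    then show "i \<in> int ` {..<N}" by blast
  qed auto
qed

lemma haar_eq: "haar_int p g = lim (R p g)"
proof -
  have "(\<Sum>i\<in>Gl p l. g (zp_of_int p i)) = (\<Sum>n<p ^ l. g (zp_of_int p (int n)))" for l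
  proof -
    have "Gl p l = int ` {..<p ^ l}" unfolding Gl_def using int_image_lessThan[of "p ^ l"] by simp
    then show ?thesis by (simp add: sum.reindex)
  qed
  then show ?thesis unfolding haar_int_def R_def by simp
qed

lemma sum_mod_count: "(\<Sum>i<N * M. F (i mod M)) = real N * (\<Sum>j<M. F j :: real)"
proof (induction N)
  case 0 then show ?case by simp
next
  case (Suc N)
  have "(\<Sum>i<Suc N * M. F (i mod M)) = (\<Sum>i\<in>{0..<N * M}. F (i mod M)) + (\<Sum>i\<in>{N * M..<Suc N * M}. F (i mod M))"
    by (simp add: lessThan_atLeast0 sum.atLeastLessThan_concat)
  also have "(\<Sum>i\<in>{N * M..<Suc N * M}. F (i mod M)) = (\<Sum>i\<in>{0..<M}. F ((i + N * M) mod M))"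
    using sum.shift_bounds_nat_ivl[of "\<lambda>i. F (i mod M)" 0 "N * M" M] by (simp add: add.commute)
  also have "\<dots> = (\<Sum>i\<in>{0..<M}. F i)" by (rule sum.cong) auto
  finally show ?case using Suc by (simp add: lessThan_atLeast0 algebra_simps)
qed

lemma R_close: assumes p0: "p > 0" and g: "\<forall>x\<in>Zp p. \<forall>y\<in>Zp p. x m = y m \<longrightarrow> \<bar>g x - g y\<bar> \<le> e"
  and ml: "m \<le> l"
  shows "\<bar>R p g l - R p g m\<bar> \<le> e"
proof -
  define F where "F n = g (zp_of_int p (int n))" for n
  have pl: "p ^ l = p ^ (l - m) * p ^ m" using ml by (simp add: power_add[symmetric])
  have s2: "(\<Sum>n<p ^ l. F (n mod p ^ m)) = real (p ^ (l - m)) * (\<Sum>j<p ^ m. F j)"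
    unfolding pl by (rule sum_mod_count)
  have "R p g l = (\<Sum>n<p ^ l. F n) / real p ^ l" unfolding R_def F_def by simp
  also have "(\<Sum>n<p ^ l. F n) = (\<Sum>n<p ^ l. F n - F (n mod p ^ m)) + (\<Sum>n<p ^ l. F (n mod p ^ m))"
    by (simp add: sum_subtractf)
  finally have "R p g l = (\<Sum>n<p ^ l. F n - F (n mod p ^ m)) / real p ^ l + real (p ^ (l - m)) * (\<Sum>j<p ^ m. F j) / real p ^ l"
    using s2 by (simp add: add_divide_distrib)
  also have "real (p ^ (l - m)) * (\<Sum>j<p ^ m. F j) / real p ^ l = R p g m"
  proof -
    have pl': "real p ^ l = real p ^ (l - m) * real p ^ m" using ml by (simp flip: power_add)
    show ?thesis unfolding R_def F_def pl' using p0 by (simp add: field_simps)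
  qed
  finally have eq: "R p g l - R p g m = (\<Sum>n<p ^ l. F n - F (n mod p ^ m)) / real p ^ l" by simp
  have "\<bar>F n - F (n mod p ^ m)\<bar> \<le> e" for n
  proof -
    have "zp_of_int p (int n) m = zp_of_int p (int (n mod p ^ m)) m"
      by (simp add: zp_of_int_def of_nat_mod)
    then show ?thesis unfolding F_def using g zp_of_int_in[OF p0] by blast
  qed
  then have S0: "(\<Sum>n<p ^ l. \<bar>F n - F (n mod p ^ m)\<bar>) \<le> real p ^ l * e"
    using sum_mono[of "{..<p ^ l}" "\<lambda>n. \<bar>F n - F (n mod p ^ m)\<bar>" "\<lambda>n. e"] by simp
  have S: "\<bar>\<Sum>n<p ^ l. F n - F (n mod p ^ m)\<bar> \<le> real p ^ l * e"
    by (rule order_trans[OF sum_abs S0])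
  have pp: "real p ^ l > 0" using p0 by simp
  show ?thesis unfolding eq abs_divide using S pp by (simp add: pos_divide_le_eq mult.commute)
qed

lemma uc_le: "uc p g \<Longrightarrow> e > 0 \<Longrightarrow> \<exists>m. \<forall>x\<in>Zp p. \<forall>y\<in>Zp p. x m = y m \<longrightarrow> \<bar>g x - g y\<bar> \<le> e"
  unfolding uc_def by (meson less_imp_le)

lemma R_convergent: assumes p0: "p > 0" and "uc p g" shows "convergent (R p g)"
proof (rule Cauchy_convergent, rule CauchyI)
  fix e :: real assume e: "e > 0"
  obtain m where m: "\<forall>x\<in>Zp p. \<forall>y\<in>Zp p. x m = y m \<longrightarrow> \<bar>g x - g y\<bar> \<le> e / 3"
    using uc_le[OF assms(2), of "e/3"] e by auto
  show "\<exists>M. \<forall>a\<ge>M. \<forall>b\<ge>M. norm (R p g a - R p g b) < e"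
  proof (intro exI allI impI)
    fix a b assume "m \<le> a" "m \<le> b"
    then have "\<bar>R p g a - R p g m\<bar> \<le> e/3" "\<bar>R p g b - R p g m\<bar> \<le> e/3"
      using R_close[OF p0 m] by auto
    then have "\<bar>R p g a - R p g b\<bar> < e" using e by linarith
    then show "norm (R p g a - R p g b) < e" by simp
  qed
qed

lemma haar_cmp: assumes p0: "p > 0" and "uc p g1" "uc p g2" and C: "\<forall>y\<in>Zp p. \<bar>g1 y - g2 y\<bar> \<le> C"
  shows "\<bar>haar_int p g1 - haar_int p g2\<bar> \<le> C"
proof -
  have l1: "R p g1 \<longlonglongrightarrow> haar_int p g1" using R_convergent[OF p0 assms(2)]
    by (simp add: haar_eq convergent_LIMSEQ_iff)
  have l2: "R p g2 \<longlonglongrightarrow> haar_int p g2" using R_convergent[OF p0 assms(3)]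
    by (simp add: haar_eq convergent_LIMSEQ_iff)
  have lim: "(\<lambda>l. \<bar>R p g1 l - R p g2 l\<bar>) \<longlonglongrightarrow> \<bar>haar_int p g1 - haar_int p g2\<bar>"
    by (intro tendsto_rabs tendsto_diff l1 l2)
  have "\<bar>R p g1 l - R p g2 l\<bar> \<le> C" for l
  proof -
    have "R p g1 l - R p g2 l = (\<Sum>n<p ^ l. g1 (zp_of_int p (int n)) - g2 (zp_of_int p (int n))) / real p ^ l"
      unfolding R_def by (simp add: sum_subtractf diff_divide_distrib)
    moreover have "\<bar>\<Sum>n<p ^ l. g1 (zp_of_int p (int n)) - g2 (zp_of_int p (int n))\<bar> \<le> real (p ^ l) * C"
    proof (rule order_trans[OF sum_abs])
      show "(\<Sum>n<p ^ l. \<bar>g1 (zp_of_int p (int n)) - g2 (zp_of_int p (int n))\<bar>) \<le> real (p ^ l) * C"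
        using sum_mono[of "{..<p ^ l}" "\<lambda>n. \<bar>g1 (zp_of_int p (int n)) - g2 (zp_of_int p (int n))\<bar>" "\<lambda>n. C"]
        C zp_of_int_in[OF p0] by simp
    qed
    moreover have "real p ^ l > 0" using p0 by simp
    ultimately show ?thesis by (simp only: abs_divide pos_divide_le_eq of_nat_power mult.commute)
  qed
  then show ?thesis using LIMSEQ_le_const2[OF lim] by blast
qed

lemma tri2: fixes a b e :: real assumes "\<bar>a\<bar> < e/2" "\<bar>b\<bar> < e/2" shows "\<bar>a + b\<bar> < e"
proof -
  have "\<bar>a + b\<bar> \<le> \<bar>a\<bar> + \<bar>b\<bar>" by (rule abs_triangle_ineq)
  moreover have "\<bar>a\<bar> + \<bar>b\<bar> < e/2 + e/2" using assms by (rule add_strict_mono)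
  moreover have "e/2 + e/2 = e" by simp
  ultimately show ?thesis by linarith
qed

lemma uc_diff: assumes p0: "p > 0" and "uc p f" "uc p g" shows "uc p (\<lambda>x. f x - g x)"
  unfolding uc_def
proof (intro allI impI)
  fix e :: real assume e: "e > 0"
  obtain m1 where m1: "\<forall>x\<in>Zp p. \<forall>y\<in>Zp p. x m1 = y m1 \<longrightarrow> \<bar>f x - f y\<bar> < e/2"
    using assms(2) e unfolding uc_def using half_gt_zero[of e] by blast
  obtain m2 where m2: "\<forall>x\<in>Zp p. \<forall>y\<in>Zp p. x m2 = y m2 \<longrightarrow> \<bar>g x - g y\<bar> < e/2"
    using assms(3) e unfolding uc_def using half_gt_zero[of e] by blast
  show "\<exists>m. \<forall>x\<in>Zp p. \<forall>y\<in>Zp p. x m = y m \<longrightarrow> \<bar>f x - g x - (f y - g y)\<bar> < e"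
  proof (intro exI ballI impI)
    fix x y assume xy: "x \<in> Zp p" "y \<in> Zp p" "x (max m1 m2) = y (max m1 m2)"
    then have "x m1 = y m1" "x m2 = y m2" using zp_agree_lower[OF p0 xy(1,2,3)] by auto
    then have a: "\<bar>f x - f y\<bar> < e/2" and b: "\<bar>g x - g y\<bar> < e/2" using m1 m2 xy by blast+
    have b': "\<bar>g y - g x\<bar> < e/2" using b by (simp add: abs_minus_commute)
    have "\<bar>(f x - f y) + (g y - g x)\<bar> < e" by (rule tri2[OF a b'])
    then show "\<bar>f x - g x - (f y - g y)\<bar> < e" by (simp add: algebra_simps)
  qed
qed

lemma uc_add: assumes p0: "p > 0" and "uc p f" "uc p g" shows "uc p (\<lambda>x. f x + g x)"
  unfolding uc_def
proof (intro allI impI)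
  fix e :: real assume e: "e > 0"
  obtain m1 where m1: "\<forall>x\<in>Zp p. \<forall>y\<in>Zp p. x m1 = y m1 \<longrightarrow> \<bar>f x - f y\<bar> < e/2"
    using assms(2) e unfolding uc_def using half_gt_zero[of e] by blast
  obtain m2 where m2: "\<forall>x\<in>Zp p. \<forall>y\<in>Zp p. x m2 = y m2 \<longrightarrow> \<bar>g x - g y\<bar> < e/2"
    using assms(3) e unfolding uc_def using half_gt_zero[of e] by blast
  show "\<exists>m. \<forall>x\<in>Zp p. \<forall>y\<in>Zp p. x m = y m \<longrightarrow> \<bar>f x + g x - (f y + g y)\<bar> < e"
  proof (intro exI ballI impI)
    fix x y assume xy: "x \<in> Zp p" "y \<in> Zp p" "x (max m1 m2) = y (max m1 m2)"
    then have "x m1 = y m1" "x m2 = y m2" using zp_agree_lower[OF p0 xy(1,2,3)] by auto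
    then have "\<bar>f x - f y\<bar> < e/2" "\<bar>g x - g y\<bar> < e/2" using m1 m2 xy by blast+
    then have "\<bar>(f x - f y) + (g x - g y)\<bar> < e" by (intro tri2) auto
    then show "\<bar>f x + g x - (f y + g y)\<bar> < e" by (simp add: algebra_simps)
  qed
qed

lemma bnd_nonneg: assumes p0: "p > 0" and "bnd p f" obtains M where "M \<ge> 0" "\<forall>x\<in>Zp p. \<bar>f x\<bar> \<le> M"
proof -
  obtain M where M: "\<forall>x\<in>Zp p. \<bar>f x\<bar> \<le> M" using assms(2) unfolding bnd_def by blast
  then have "M \<ge> 0" using zp_zero_in[OF p0] by force
  then show ?thesis using M that by blast
qed

lemma uc_mult: assumes p0: "p > 0" and f: "uc p f" and g: "uc p g" shows "uc p (\<lambda>x. f x * g x)"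
  unfolding uc_def
proof (intro allI impI)
  fix e :: real assume e: "e > 0"
  obtain Mf where Mf: "Mf \<ge> 0" "\<forall>x\<in>Zp p. \<bar>f x\<bar> \<le> Mf" using bnd_nonneg[OF p0 bnd_of_uc[OF p0 f]] by blast
  obtain Mg where Mg: "Mg \<ge> 0" "\<forall>x\<in>Zp p. \<bar>g x\<bar> \<le> Mg" using bnd_nonneg[OF p0 bnd_of_uc[OF p0 g]] by blast
  define e1 where "e1 = e / (2 * (Mg + 1))"
  define e2 where "e2 = e / (2 * (Mf + 1))"
  have e1: "e1 > 0" "Mg * e1 < e/2" using e Mg(1) unfolding e1_def by (auto simp: field_simps)
  have e2: "e2 > 0" "Mf * e2 < e/2" using e Mf(1) unfolding e2_def by (auto simp: field_simps)
  obtain m1 where m1: "\<forall>x\<in>Zp p. \<forall>y\<in>Zp p. x m1 = y m1 \<longrightarrow> \<bar>f x - f y\<bar> < e1"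
    using f e1 unfolding uc_def by blast
  obtain m2 where m2: "\<forall>x\<in>Zp p. \<forall>y\<in>Zp p. x m2 = y m2 \<longrightarrow> \<bar>g x - g y\<bar> < e2"
    using g e2 unfolding uc_def by blast
  show "\<exists>m. \<forall>x\<in>Zp p. \<forall>y\<in>Zp p. x m = y m \<longrightarrow> \<bar>f x * g x - f y * g y\<bar> < e"
  proof (intro exI ballI impI)
    fix x y assume xy: "x \<in> Zp p" "y \<in> Zp p" "x (max m1 m2) = y (max m1 m2)"
    then have "x m1 = y m1" "x m2 = y m2" using zp_agree_lower[OF p0 xy(1,2,3)] by auto
    then have a: "\<bar>f x - f y\<bar> \<le> e1" "\<bar>g x - g y\<bar> \<le> e2" using m1 m2 xy by (auto intro: less_imp_le)
    have "f x * g x - f y * g y = (f x - f y) * g x + f y * (g x - g y)" by (simp add: algebra_simps)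
    then have "\<bar>f x * g x - f y * g y\<bar> \<le> \<bar>f x - f y\<bar> * \<bar>g x\<bar> + \<bar>f y\<bar> * \<bar>g x - g y\<bar>"
      by (simp add: abs_mult[symmetric] abs_triangle_ineq)
    also have "\<dots> \<le> e1 * Mg + Mf * e2"
      using a Mf Mg xy by (intro add_mono mult_mono) auto
    also have "\<dots> < e" using e1 e2 by (simp add: mult.commute)
    finally show "\<bar>f x * g x - f y * g y\<bar> < e" .
  qed
qed

lemma uc_comp_sub: assumes p0: "p > 0" and w: "uc p w" and x: "x \<in> Zp p" shows "uc p (\<lambda>y. w (zp_sub p x y))"
  unfolding uc_def
proof (intro allI impI)
  fix e :: real assume "e > 0"
  then obtain m where m: "\<forall>a\<in>Zp p. \<forall>b\<in>Zp p. a m = b m \<longrightarrow> \<bar>w a - w b\<bar> < e" using w unfolding uc_def by blast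
  show "\<exists>m. \<forall>y\<in>Zp p. \<forall>y'\<in>Zp p. y m = y' m \<longrightarrow> \<bar>w (zp_sub p x y) - w (zp_sub p x y')\<bar> < e"
  proof (intro exI ballI impI)
    fix y y' assume "y \<in> Zp p" "y' \<in> Zp p" "y m = y' m"
    then show "\<bar>w (zp_sub p x y) - w (zp_sub p x y')\<bar> < e"
      using m zp_sub_in[OF p0 x] by (simp add: zp_sub_def)
  qed
qed

lemma uc_lip: assumes f: "uc p f" and L: "0 \<le> L" "\<And>a b. \<bar>S a - S b\<bar> \<le> L * \<bar>a - b\<bar>" shows "uc p (\<lambda>x. S (f x))"
  unfolding uc_def
proof (intro allI impI)
  fix e :: real assume e: "e > 0"
  then have "e / (L + 1) > 0" using L by simp
  then obtain m where m: "\<forall>x\<in>Zp p. \<forall>y\<in>Zp p. x m = y m \<longrightarrow> \<bar>f x - f y\<bar> < e / (L + 1)" using f unfolding uc_def by blast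
  show "\<exists>m. \<forall>x\<in>Zp p. \<forall>y\<in>Zp p. x m = y m \<longrightarrow> \<bar>S (f x) - S (f y)\<bar> < e"
  proof (intro exI ballI impI)
    fix x y assume xy: "x \<in> Zp p" "y \<in> Zp p" "x m = y m"
    have "\<bar>S (f x) - S (f y)\<bar> \<le> L * \<bar>f x - f y\<bar>" by (rule L(2))
    also have "\<dots> \<le> L * (e / (L + 1))"
    proof -
      have "\<bar>f x - f y\<bar> < e / (L + 1)" using m xy by blast
      then show ?thesis using L(1) by (intro mult_left_mono) auto
    qed
    also have "\<dots> < e" using L(1) e by (simp add: field_simps)
    finally show "\<bar>S (f x) - S (f y)\<bar> < e" .
  qed
qed

lemma conv_diff: assumes p0: "p > 0" and w: "uc p w" and f: "uc p f" and g: "uc p g" and x: "x \<in> Zp p"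
  and C: "\<forall>y\<in>Zp p. \<bar>f y - g y\<bar> \<le> C" and Mw: "\<forall>z\<in>Zp p. \<bar>w z\<bar> \<le> Mw"
  shows "\<bar>conv p w f x - conv p w g x\<bar> \<le> Mw * C"
  unfolding conv_def
proof (rule haar_cmp[OF p0])
  show "uc p (\<lambda>y. w (zp_sub p x y) * f y)" "uc p (\<lambda>y. w (zp_sub p x y) * g y)"
    using uc_mult[OF p0 uc_comp_sub[OF p0 w x]] f g by auto
  show "\<forall>y\<in>Zp p. \<bar>w (zp_sub p x y) * f y - w (zp_sub p x y) * g y\<bar> \<le> Mw * C"
  proof
    fix y assume y: "y \<in> Zp p"
    have "\<bar>w (zp_sub p x y) * f y - w (zp_sub p x y) * g y\<bar> = \<bar>w (zp_sub p x y)\<bar> * \<bar>f y - g y\<bar>"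
      by (simp add: abs_mult[symmetric] algebra_simps)
    also have "\<dots> \<le> Mw * C" using Mw C y zp_sub_in[OF p0 x y] by (intro mult_mono) auto
    finally show "\<bar>w (zp_sub p x y) * f y - w (zp_sub p x y) * g y\<bar> \<le> Mw * C" .
  qed
qed

lemma conv_uc: assumes p0: "p > 0" and w: "uc p w" and f: "uc p f" shows "uc p (conv p w f)"
  unfolding uc_def
proof (intro allI impI)
  fix e :: real assume e: "e > 0"
  obtain Mf where Mf: "Mf \<ge> 0" "\<forall>x\<in>Zp p. \<bar>f x\<bar> \<le> Mf" using bnd_nonneg[OF p0 bnd_of_uc[OF p0 f]] by blast
  define e1 where "e1 = e / (2 * (Mf + 1))"
  have den: "2 * (Mf + 1) > 0" using Mf(1) by simp
  have e1: "e1 > 0" "e1 * Mf < e"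
  proof -
    show "e1 > 0" unfolding e1_def using e den by (intro divide_pos_pos) auto
    have "e * Mf < e * (2 * (Mf + 1))" using e Mf(1) by (intro mult_strict_left_mono) auto
    then have "e * Mf / (2 * (Mf + 1)) < e" using den by (simp add: pos_divide_less_eq)
    then show "e1 * Mf < e" unfolding e1_def by simp
  qed
  obtain m where m: "\<forall>a\<in>Zp p. \<forall>b\<in>Zp p. a m = b m \<longrightarrow> \<bar>w a - w b\<bar> < e1" using w e1 unfolding uc_def by blast
  show "\<exists>m. \<forall>x\<in>Zp p. \<forall>x'\<in>Zp p. x m = x' m \<longrightarrow> \<bar>conv p w f x - conv p w f x'\<bar> < e"
  proof (intro exI ballI impI)
    fix x x' assume xx: "x \<in> Zp p" "x' \<in> Zp p" "x m = x' m"
    have "\<bar>conv p w f x - conv p w f x'\<bar> \<le> e1 * Mf"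
      unfolding conv_def
    proof (rule haar_cmp[OF p0])
      show "uc p (\<lambda>y. w (zp_sub p x y) * f y)" "uc p (\<lambda>y. w (zp_sub p x' y) * f y)"
        using uc_mult[OF p0 uc_comp_sub[OF p0 w] f] xx by auto
      show "\<forall>y\<in>Zp p. \<bar>w (zp_sub p x y) * f y - w (zp_sub p x' y) * f y\<bar> \<le> e1 * Mf"
      proof
        fix y assume y: "y \<in> Zp p"
        have "zp_sub p x y m = zp_sub p x' y m" using xx by (simp add: zp_sub_def)
        then have "\<bar>w (zp_sub p x y) - w (zp_sub p x' y)\<bar> \<le> e1"
          using m zp_sub_in[OF p0 xx(1) y] zp_sub_in[OF p0 xx(2) y] by (meson less_imp_le)
        then have "\<bar>w (zp_sub p x y) - w (zp_sub p x' y)\<bar> * \<bar>f y\<bar> \<le> e1 * Mf"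
          using Mf y e1 by (intro mult_mono) auto
        moreover have "\<bar>w (zp_sub p x y) * f y - w (zp_sub p x' y) * f y\<bar> = \<bar>w (zp_sub p x y) - w (zp_sub p x' y)\<bar> * \<bar>f y\<bar>"
          by (simp add: abs_mult[symmetric] algebra_simps)
        ultimately show "\<bar>w (zp_sub p x y) * f y - w (zp_sub p x' y) * f y\<bar> \<le> e1 * Mf" by simp
      qed
    qed
    then show "\<bar>conv p w f x - conv p w f x'\<bar> < e" using e1 by simp
  qed
qed



lemma exp_neg_bound: assumes "y \<ge> (0::real)" shows "exp (- y) \<le> 1 - y + y^2"
proof -
  have "1 + y \<le> exp y" by (rule exp_ge_add_one_self)
  then have "exp (- y) \<le> 1 / (1 + y)" using assms by (simp add: exp_minus field_simps)
  also have "1 / (1 + y) \<le> 1 - y + y^2"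
  proof -
    have "1 \<le> (1 + y) * (1 - y + y^2)" using assms by (simp add: algebra_simps power2_eq_square power3_eq_cube)
    then show ?thesis using assms by (simp add: field_simps)
  qed
  finally show ?thesis .
qed

lemma gap3: fixes a b x y g :: real shows "a < b \<Longrightarrow> \<bar>a - x\<bar> \<le> g \<Longrightarrow> \<bar>b - y\<bar> < g \<Longrightarrow> 3 * g = x - y \<Longrightarrow> 0 < x - y \<Longrightarrow> False"
  by linarith

lemma barrier:
  fixes \<phi> :: "real \<Rightarrow> real" and D D' G :: "real \<Rightarrow> 'a \<Rightarrow> real"
  assumes tau: "\<tau> > 0" and K: "K \<ge> 0"
  and H1: "\<And>t a. t \<in> {0..T} \<Longrightarrow> a \<in> A \<Longrightarrow> \<bar>D t a\<bar> \<le> \<phi> t"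
  and H2: "\<And>t c. t \<in> {0..T} \<Longrightarrow> (\<And>a. a \<in> A \<Longrightarrow> \<bar>D t a\<bar> \<le> c) \<Longrightarrow> \<phi> t \<le> c"
  and H3: "\<And>t e. t \<in> {0..T} \<Longrightarrow> e > 0 \<Longrightarrow> \<exists>d>0. \<forall>s\<in>{0..T}. \<bar>s - t\<bar> < d \<longrightarrow> (\<forall>a\<in>A. \<bar>D s a - D t a\<bar> \<le> e)"
  and H4: "\<And>t e. t \<in> {0<..T} \<Longrightarrow> e > 0 \<Longrightarrow> \<exists>d>0. \<forall>s\<in>{0..<t}. t - s < d \<longrightarrow> (\<forall>a\<in>A. \<bar>D t a - D s a - (t - s) * D' t a\<bar> \<le> e * (t - s))"
  and H5: "\<And>t a. t \<in> {0..T} \<Longrightarrow> a \<in> A \<Longrightarrow> \<tau> * D' t a = - D t a + G t a"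
  and H6: "\<And>t a. t \<in> {0..T} \<Longrightarrow> a \<in> A \<Longrightarrow> \<bar>G t a\<bar> \<le> K * \<phi> t + \<epsilon>"
  and d0: "\<phi> 0 < \<delta>" and ed: "\<epsilon> < \<delta>"
  shows "\<forall>t\<in>{0..T}. \<phi> t < \<delta> * exp (K * t / \<tau>)"
proof (rule ccontr)
  define B where "B t = \<delta> * exp (K * t / \<tau>)" for t
  assume "\<not> (\<forall>t\<in>{0..T}. \<phi> t < \<delta> * exp (K * t / \<tau>))"
  then obtain t0 where t0: "t0 \<in> {0..T}" "\<phi> t0 \<ge> B t0" unfolding B_def by (auto simp: not_less)
  have phicont: "\<exists>d>0. \<forall>s\<in>{0..T}. \<bar>s - t\<bar> < d \<longrightarrow> \<bar>\<phi> s - \<phi> t\<bar> \<le> e" if t: "t \<in> {0..T}" and e: "e > 0" for t e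
  proof -
    obtain d where d: "d > 0" "\<forall>s\<in>{0..T}. \<bar>s - t\<bar> < d \<longrightarrow> (\<forall>a\<in>A. \<bar>D s a - D t a\<bar> \<le> e)"
      using H3[OF t e] by blast
    show ?thesis
    proof (intro exI conjI ballI impI)
      fix s assume s: "s \<in> {0..T}" "\<bar>s - t\<bar> < d"
      have "\<phi> s \<le> \<phi> t + e"
      proof (rule H2[OF s(1)])
        fix a assume a: "a \<in> A"
        show "\<bar>D s a\<bar> \<le> \<phi> t + e" using d(2) s a H1[OF t a] by fastforce
      qed
      moreover have "\<phi> t \<le> \<phi> s + e"
      proof (rule H2[OF t])
        fix a assume a: "a \<in> A"
        show "\<bar>D t a\<bar> \<le> \<phi> s + e" using d(2) s a H1[OF s(1) a] by fastforce
      qed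
      ultimately show "\<bar>\<phi> s - \<phi> t\<bar> \<le> e" by linarith
    qed (rule d(1))
  qed
  have Bcont: "continuous_on {0..T} B" unfolding B_def using tau by (intro continuous_intros) auto
  have phic: "continuous_on {0..T} \<phi>"
    unfolding continuous_on_iff
  proof (intro ballI allI impI)
    fix t e assume t: "t \<in> {0..T}" and e: "(e::real) > 0"
    obtain d where "d > 0" "\<forall>s\<in>{0..T}. \<bar>s - t\<bar> < d \<longrightarrow> \<bar>\<phi> s - \<phi> t\<bar> \<le> e/2"
      using phicont[OF t, of "e/2"] e by auto
    then show "\<exists>d>0. \<forall>s\<in>{0..T}. dist s t < d \<longrightarrow> dist (\<phi> s) (\<phi> t) < e"
      using e by (auto simp: dist_real_def intro!: exI[of _ d])
  qed
  define S where "S = {0..T} \<inter> (\<lambda>t. \<phi> t - B t) -` {0..}"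
  have Scl: "closed S" unfolding S_def
    by (rule continuous_closed_preimage) (auto intro: continuous_on_diff phic Bcont)
  have Sne: "S \<noteq> {}" using t0 unfolding S_def by auto
  have Sbd: "bdd_below S" unfolding S_def by (auto intro: bdd_belowI[of _ 0])
  define ts where "ts = Inf S"
  have tsS: "ts \<in> S" unfolding ts_def by (rule closed_contains_Inf[OF Sne Sbd Scl])
  then have ts: "ts \<in> {0..T}" "\<phi> ts \<ge> B ts" unfolding S_def by auto
  have before: "\<phi> s < B s" if "s \<in> {0..T}" "s < ts" for s
  proof (rule ccontr)
    assume "\<not> \<phi> s < B s"
    then have "s \<in> S" using that unfolding S_def by auto
    then have "ts \<le> s" unfolding ts_def using Sbd by (rule cInf_lower)
    then show False using that by simp
  qed
  have B0: "B 0 = \<delta>" unfolding B_def by simp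
  have tspos: "ts > 0"
  proof (rule ccontr)
    assume "\<not> ts > 0" then have "ts = 0" using ts by simp
    then show False using ts d0 B0 by simp
  qed
  have z0: "0 \<in> {0..T}" using t0 by auto
  have dpos: "\<delta> > 0"
  proof (cases "A = {}")
    case True
    then have "\<phi> 0 \<le> \<phi> 0 - 1" using H2[OF z0, of "\<phi> 0 - 1"] by blast
    then show ?thesis by simp
  next
    case False
    then obtain a where "a \<in> A" by blast
    then show ?thesis using H1[OF z0] d0 by (smt (verit))
  qed
  have Bge: "B ts \<ge> \<delta>"
  proof -
    have "exp (K * ts / \<tau>) \<ge> 1" using K tau ts by simp
    then show ?thesis unfolding B_def using dpos by simp
  qed
  have eqB: "\<phi> ts = B ts"
  proof (rule ccontr)
    assume "\<phi> ts \<noteq> B ts"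
    then have gap: "\<phi> ts - B ts > 0" using ts by simp
    obtain d1 where d1: "d1 > 0" "\<forall>s\<in>{0..T}. \<bar>s - ts\<bar> < d1 \<longrightarrow> \<bar>\<phi> s - \<phi> ts\<bar> \<le> (\<phi> ts - B ts)/3"
      using phicont[OF ts(1), of "(\<phi> ts - B ts)/3"] gap by auto
    have g3: "(\<phi> ts - B ts)/3 > 0" using gap by simp
    obtain d2 where d2: "d2 > 0" "\<forall>s\<in>{0..T}. dist s ts < d2 \<longrightarrow> dist (B s) (B ts) < (\<phi> ts - B ts)/3"
      using Bcont ts(1) g3 unfolding continuous_on_iff by blast
    define s where "s = max 0 (ts - min d1 d2 / 2)"
    have s: "s \<in> {0..T}" "s < ts" "\<bar>s - ts\<bar> < d1" "dist s ts < d2"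
      using tspos ts d1(1) d2(1) unfolding s_def by (auto simp: dist_real_def)
    have "\<phi> s < B s" by (rule before[OF s(1,2)])
    moreover have "\<bar>\<phi> s - \<phi> ts\<bar> \<le> (\<phi> ts - B ts)/3" using d1 s by blast
    moreover have "\<bar>B s - B ts\<bar> < (\<phi> ts - B ts)/3" using d2 s by (auto simp: dist_real_def)
    moreover have "3 * ((\<phi> ts - B ts)/3) = \<phi> ts - B ts" by simp
    ultimately show False using gap by (rule gap3)
  qed
  define Bs where "Bs = B ts"
  define e where "e = (\<delta> - \<epsilon>) / (4 * \<tau>)"
  have epos: "e > 0" unfolding e_def using ed tau by simp
  obtain d1 where d1: "d1 > 0" "\<forall>s\<in>{0..<ts}. ts - s < d1 \<longrightarrow> (\<forall>a\<in>A. \<bar>D ts a - D s a - (ts - s) * D' ts a\<bar> \<le> e * (ts - s))"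
    using H4[of ts e] ts tspos epos by auto
  define d3 where "d3 = e * \<tau>^2 / (Bs * K^2 + 1)"
  have Bspos: "Bs > 0" unfolding Bs_def using Bge dpos by simp
  have d3pos: "d3 > 0" unfolding d3_def using epos tau Bspos by (simp add: add_nonneg_pos)
  define h where "h = min ts (min d1 d3) / 2"
  have hpos: "h > 0" unfolding h_def using tspos d1 d3pos by simp
  have hlt: "h < ts" "h < d1" "h \<le> d3" unfolding h_def using tspos d1 d3pos by auto
  define s where "s = ts - h"
  have s: "s \<in> {0..<ts}" "s \<in> {0..T}" "ts - s = h" unfolding s_def using hlt hpos ts by auto
  define RHS where "RHS = B s + h * (K * Bs + \<epsilon>) / \<tau> + e * h"
  have main: "\<phi> ts \<le> RHS / (1 + h / \<tau>)"
  proof (rule H2[OF ts(1)])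
    fix a assume a: "a \<in> A"
    define r where "r = D ts a - D s a - h * D' ts a"
    have r: "\<bar>r\<bar> \<le> e * h" unfolding r_def using d1(2) s hlt a by auto
    have eq5: "\<tau> * D' ts a = - D ts a + G ts a" by (rule H5[OF ts(1) a])
    have "D ts a * (1 + h / \<tau>) = D s a + h * G ts a / \<tau> + r"
    proof -
      have dd: "D' ts a = (- D ts a + G ts a) / \<tau>" using eq5 tau by (simp add: field_simps)
      show ?thesis unfolding r_def dd using tau by (simp add: field_simps)
    qed
    note eqX = this
    have pos: "1 + h / \<tau> > 0" using hpos tau by (simp add: add_pos_pos)
    have "\<bar>D ts a\<bar> * (1 + h / \<tau>) = \<bar>D ts a * (1 + h / \<tau>)\<bar>" using pos by (simp add: abs_mult)
    also have "\<dots> = \<bar>D s a + h * G ts a / \<tau> + r\<bar>" using eqX by simp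
    also have "\<dots> \<le> \<bar>D s a\<bar> + \<bar>h * G ts a / \<tau>\<bar> + \<bar>r\<bar>"
    proof -
      have "\<bar>D s a + h * G ts a / \<tau> + r\<bar> \<le> \<bar>D s a + h * G ts a / \<tau>\<bar> + \<bar>r\<bar>" by (rule abs_triangle_ineq)
      moreover have "\<bar>D s a + h * G ts a / \<tau>\<bar> \<le> \<bar>D s a\<bar> + \<bar>h * G ts a / \<tau>\<bar>" by (rule abs_triangle_ineq)
      ultimately show ?thesis by linarith
    qed
    also have "\<bar>h * G ts a / \<tau>\<bar> = h * \<bar>G ts a\<bar> / \<tau>" using hpos tau by (simp add: abs_mult abs_divide)
    finally have "\<bar>D ts a\<bar> * (1 + h / \<tau>) \<le> \<bar>D s a\<bar> + h * \<bar>G ts a\<bar> / \<tau> + \<bar>r\<bar>" .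
    also have "\<dots> \<le> B s + h * (K * Bs + \<epsilon>) / \<tau> + e * h"
    proof -
      have "\<bar>D s a\<bar> \<le> B s" using H1[OF s(2) a] before[OF s(2)] s by force
      moreover have "\<bar>G ts a\<bar> \<le> K * Bs + \<epsilon>" using H6[OF ts(1) a] eqB unfolding Bs_def by simp
      then have "h * \<bar>G ts a\<bar> / \<tau> \<le> h * (K * Bs + \<epsilon>) / \<tau>" using hpos tau
        by (simp add: divide_right_mono mult_left_mono)
      ultimately show ?thesis using r by linarith
    qed
    finally have "\<bar>D ts a\<bar> * (1 + h / \<tau>) \<le> RHS" unfolding RHS_def .
    then show "\<bar>D ts a\<bar> \<le> RHS / (1 + h / \<tau>)" using hpos tau
      by (simp add: field_simps add_pos_pos)
  qed
  have m2: "Bs * (1 + h / \<tau>) \<le> RHS"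
    using main eqB hpos tau unfolding Bs_def by (simp add: field_simps add_pos_pos)
  define y where "y = K * h / \<tau>"
  have ypos: "y \<ge> 0" unfolding y_def using K hpos tau by simp
  have Bsb: "B s \<le> Bs * (1 - y + y^2)"
  proof -
    have "B s = Bs * exp (- y)" unfolding B_def Bs_def y_def s_def
      by (simp add: algebra_simps diff_divide_distrib exp_diff exp_minus divide_inverse)
    also have "\<dots> \<le> Bs * (1 - y + y^2)" using exp_neg_bound[OF ypos] Bspos by simp
    finally show ?thesis .
  qed
  have "Bs * h / \<tau> \<le> Bs * y^2 + h * \<epsilon> / \<tau> + e * h"
  proof -
    have "Bs * (1 + h / \<tau>) \<le> Bs * (1 - y + y^2) + h * (K * Bs + \<epsilon>) / \<tau> + e * h"
      using m2 Bsb unfolding RHS_def by linarith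
    moreover have "Bs * y = h * K * Bs / \<tau>" unfolding y_def by simp
    ultimately show ?thesis by (simp add: algebra_simps add_divide_distrib)
  qed
  moreover have "Bs * y^2 \<le> e * h"
  proof -
    have "Bs * K^2 * h \<le> Bs * K^2 * d3" using hlt Bspos by (simp add: mult_left_mono)
    also have "Bs * K^2 * d3 \<le> e * \<tau>^2"
    proof -
      have X: "Bs * K^2 \<ge> 0" using Bspos by simp
      have c: "Bs * K^2 + 1 > 0" using X by simp
      have et: "e * \<tau>^2 \<ge> 0" using epos tau by simp
      have "(Bs * K^2) * (e * \<tau>^2) \<le> (e * \<tau>^2) * (Bs * K^2 + 1)"
        using et by (simp add: algebra_simps)
      then have "(Bs * K^2) * (e * \<tau>^2) / (Bs * K^2 + 1) \<le> e * \<tau>^2" using c by (simp add: pos_divide_le_eq)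
      then show ?thesis unfolding d3_def by simp
    qed
    finally have "Bs * K^2 * h \<le> e * \<tau>^2" .
    then have "Bs * K^2 * h * h \<le> e * \<tau>^2 * h" using hpos by (intro mult_right_mono) auto
    then have "Bs * K^2 * h * h / \<tau>^2 \<le> e * \<tau>^2 * h / \<tau>^2" using tau by (intro divide_right_mono) auto
    also have "e * \<tau>^2 * h / \<tau>^2 = e * h" using tau by simp
    also have "Bs * K^2 * h * h / \<tau>^2 = Bs * y^2" unfolding y_def
      by (simp add: power_divide power_mult_distrib power2_eq_square)
    finally show ?thesis .
  qed
  ultimately have "Bs * h / \<tau> \<le> h * (\<epsilon> / \<tau> + 2 * e)" by (simp add: algebra_simps)
  then have hq: "h * (Bs / \<tau> - (\<epsilon> / \<tau> + 2 * e)) \<le> 0" by (simp add: algebra_simps)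
  have "Bs / \<tau> - (\<epsilon> / \<tau> + 2 * e) \<le> 0"
  proof (rule ccontr)
    assume "\<not> Bs / \<tau> - (\<epsilon> / \<tau> + 2 * e) \<le> 0"
    then have "h * (Bs / \<tau> - (\<epsilon> / \<tau> + 2 * e)) > 0" using hpos by simp
    then show False using hq by simp
  qed
  then have "Bs / \<tau> \<le> \<epsilon> / \<tau> + 2 * e" by simp
  then have "Bs \<le> \<epsilon> + 2 * e * \<tau>" using tau by (simp add: field_simps)
  also have "2 * e * \<tau> = (\<delta> - \<epsilon>) / 2" unfolding e_def using tau by simp
  finally have "Bs \<le> \<epsilon> + (\<delta> - \<epsilon>) / 2" .
  then have "Bs \<le> \<epsilon> + \<delta> / 2 - \<epsilon> / 2" by (simp add: diff_divide_distrib)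
  then show False using Bge ed unfolding Bs_def by linarith
qed



lemma supn_ge: assumes "bnd p f" "x \<in> Zp p" shows "\<bar>f x\<bar> \<le> supn p f"
proof -
  obtain M where M: "\<forall>x\<in>Zp p. \<bar>f x\<bar> \<le> M" using assms(1) unfolding bnd_def by blast
  have "bdd_above ((\<lambda>x. \<bar>f x\<bar>) ` Zp p)" using M by (auto intro: bdd_aboveI2)
  then show ?thesis unfolding supn_def using assms(2) by (rule cSUP_upper[rotated])
qed

lemma supn_le: assumes "p > 0" "\<And>x. x \<in> Zp p \<Longrightarrow> \<bar>f x\<bar> \<le> c" shows "supn p f \<le> c"
  unfolding supn_def using zp_zero_in[OF assms(1)] assms(2) by (intro cSUP_least) auto

lemma bnd_diff: assumes "bnd p f" "bnd p g" shows "bnd p (\<lambda>x. f x - g x)"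
proof -
  obtain M1 where M1: "\<forall>x\<in>Zp p. \<bar>f x\<bar> \<le> M1" using assms(1) unfolding bnd_def by blast
  obtain M2 where M2: "\<forall>x\<in>Zp p. \<bar>g x\<bar> \<le> M2" using assms(2) unfolding bnd_def by blast
  have "\<bar>f x - g x\<bar> \<le> M1 + M2" if "x \<in> Zp p" for x
    using abs_triangle_ineq4[of "f x" "g x"] M1 M2 that by fastforce
  then show ?thesis unfolding bnd_def by blast
qed

lemma bnd_div: "bnd p f \<Longrightarrow> bnd p (\<lambda>x. f x / c)"
proof -
  assume "bnd p f"
  then obtain M where M: "\<forall>x\<in>Zp p. \<bar>f x\<bar> \<le> M" unfolding bnd_def by blast
  have "\<bar>f x / c\<bar> \<le> M / \<bar>c\<bar>" if "x \<in> Zp p" for x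
    using M that by (simp add: abs_divide divide_right_mono)
  then show ?thesis unfolding bnd_def by blast
qed

lemma XN: assumes "bnd p (fst q)" "bnd p (snd q)" "x \<in> Zp p"
  shows "\<bar>fst q x\<bar> \<le> Xnorm p q" "\<bar>snd q x\<bar> \<le> Xnorm p q"
  using supn_ge[OF assms(1,3)] supn_ge[OF assms(2,3)] unfolding Xnorm_def by auto

lemma Xnorm_le: assumes "p > 0" "\<And>x. x \<in> Zp p \<Longrightarrow> \<bar>fst q x\<bar> \<le> c \<and> \<bar>snd q x\<bar> \<le> c"
  shows "Xnorm p q \<le> c"
  unfolding Xnorm_def using supn_le[OF assms(1), of "fst q" c] supn_le[OF assms(1), of "snd q" c] assms(2)
  by auto

lemma C1_unpack:
  assumes p1: "p > 1" and sol: "is_C1_solution p \<tau> G u0 u"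
  obtains u' where
    "\<And>t. t \<ge> 0 \<Longrightarrow> uc p (fst (u t)) \<and> uc p (snd (u t))"
    "\<And>t. t \<ge> 0 \<Longrightarrow> uc p (fst (u' t)) \<and> uc p (snd (u' t))"
    "\<And>t e. t \<ge> 0 \<Longrightarrow> e > 0 \<Longrightarrow> \<exists>d>0. \<forall>s\<ge>0. \<bar>s - t\<bar> < d \<longrightarrow> (\<forall>x\<in>Zp p.
        \<bar>fst (u s) x - fst (u t) x - (s - t) * fst (u' t) x\<bar> \<le> e * \<bar>s - t\<bar> \<and>
        \<bar>snd (u s) x - snd (u t) x - (s - t) * snd (u' t) x\<bar> \<le> e * \<bar>s - t\<bar>)"
    "\<And>t x. t \<ge> 0 \<Longrightarrow> x \<in> Zp p \<Longrightarrow> fst (u' t) x + fst (u t) x / \<tau> = fst (G (u t) t) x / \<tau> \<and>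
            snd (u' t) x + snd (u t) x / \<tau> = snd (G (u t) t) x / \<tau>"
    "\<And>x. x \<in> Zp p \<Longrightarrow> fst (u 0) x = fst u0 x \<and> snd (u 0) x = snd u0 x"
proof -
  have p0: "p > 0" using p1 by simp
  have inX: "\<forall>t\<ge>0. in_X p (u t)" using sol unfolding is_C1_solution_def by (rule conjunct1)
  have ucu: "uc p (fst (u t)) \<and> uc p (snd (u t))" if "t \<ge> 0" for t
  proof -
    have "in_X p (u t)" using inX that by blast
    then show ?thesis unfolding in_X_def using uc_of_lcont[OF p0 lcont_of_cont[OF p1]] by blast
  qed
  have ex: "\<exists>u'. (\<forall>t\<ge>0. in_X p (u' t)) \<and>
        (\<forall>t\<ge>0. ((\<lambda>s. Xnorm p (Xsub (((\<lambda>x. (fst (u s) x - fst (u t) x) / (s - t)),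
                                        (\<lambda>x. (snd (u s) x - snd (u t) x) / (s - t))))
                                   (u' t))) \<longlongrightarrow> 0) (at t within {0..})) \<and>
        (\<forall>t\<ge>0. ((\<lambda>s. Xnorm p (Xsub (u' s) (u' t))) \<longlongrightarrow> 0) (at t within {0..})) \<and>
        (\<forall>t\<ge>0. \<forall>x\<in>Zp p.
            fst (u' t) x + fst (u t) x / \<tau> = fst (G (u t) t) x / \<tau> \<and>
            snd (u' t) x + snd (u t) x / \<tau> = snd (G (u t) t) x / \<tau>)"
    using sol unfolding is_C1_solution_def by (rule conjunct1[OF conjunct2])
  have init: "\<forall>x\<in>Zp p. fst (u 0) x = fst u0 x \<and> snd (u 0) x = snd u0 x"
    using sol unfolding is_C1_solution_def by (rule conjunct2[OF conjunct2])
  obtain u' where u'X: "\<forall>t\<ge>0. in_X p (u' t)"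
    and der: "\<forall>t\<ge>0. ((\<lambda>s. Xnorm p (Xsub (((\<lambda>x. (fst (u s) x - fst (u t) x) / (s - t)),
                                        (\<lambda>x. (snd (u s) x - snd (u t) x) / (s - t))))
                                   (u' t))) \<longlongrightarrow> 0) (at t within {0..})"
    and ode: "\<forall>t\<ge>0. \<forall>x\<in>Zp p.
            fst (u' t) x + fst (u t) x / \<tau> = fst (G (u t) t) x / \<tau> \<and>
            snd (u' t) x + snd (u t) x / \<tau> = snd (G (u t) t) x / \<tau>"
    using ex by blast
  have ucu': "uc p (fst (u' t)) \<and> uc p (snd (u' t))" if "t \<ge> 0" for t
    using u'X that unfolding in_X_def
    using uc_of_lcont[OF p0 lcont_of_cont[OF p1]] by blast
  have derp: "\<exists>d>0. \<forall>s\<ge>0. \<bar>s - t\<bar> < d \<longrightarrow> (\<forall>x\<in>Zp p.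
        \<bar>fst (u s) x - fst (u t) x - (s - t) * fst (u' t) x\<bar> \<le> e * \<bar>s - t\<bar> \<and>
        \<bar>snd (u s) x - snd (u t) x - (s - t) * snd (u' t) x\<bar> \<le> e * \<bar>s - t\<bar>)"
    if t: "t \<ge> 0" and e: "e > 0" for t e
  proof -
    obtain d where d: "d > 0" "\<forall>s\<in>{0..}. 0 < dist s t \<and> dist s t < d \<longrightarrow>
        dist (Xnorm p (Xsub (((\<lambda>x. (fst (u s) x - fst (u t) x) / (s - t)),
                                        (\<lambda>x. (snd (u s) x - snd (u t) x) / (s - t))))
                                   (u' t))) 0 < e"
      using der t e unfolding Lim_within by blast
    show ?thesis
    proof (intro exI conjI allI impI ballI)
      fix s x assume s: "s \<ge> 0" "\<bar>s - t\<bar> < d" and x: "x \<in> Zp p"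
      let ?q = "Xsub (((\<lambda>x. (fst (u s) x - fst (u t) x) / (s - t)),
                                        (\<lambda>x. (snd (u s) x - snd (u t) x) / (s - t))))
                                   (u' t)"
      have "\<bar>fst (u s) x - fst (u t) x - (s - t) * fst (u' t) x\<bar> \<le> e * \<bar>s - t\<bar> \<and>
        \<bar>snd (u s) x - snd (u t) x - (s - t) * snd (u' t) x\<bar> \<le> e * \<bar>s - t\<bar>"
      proof (cases "s = t")
        case True then show ?thesis by simp
      next
        case False
        have lt: "Xnorm p ?q < e" using d(2) s False by (auto simp: dist_real_def)
        have b: "bnd p (fst ?q)" "bnd p (snd ?q)" unfolding Xsub_def
          using ucu[OF s(1)] ucu[OF t] ucu'[OF t] bnd_of_uc[OF p0]
          by (auto intro!: bnd_diff bnd_div)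
        have "\<bar>fst ?q x\<bar> < e" "\<bar>snd ?q x\<bar> < e" using XN[OF b x] lt by auto
        then have a: "\<bar>(fst (u s) x - fst (u t) x) / (s - t) - fst (u' t) x\<bar> \<le> e"
            "\<bar>(snd (u s) x - snd (u t) x) / (s - t) - snd (u' t) x\<bar> \<le> e"
          unfolding Xsub_def by auto
        have st: "s - t \<noteq> 0" using False by simp
        have "fst (u s) x - fst (u t) x - (s - t) * fst (u' t) x = ((fst (u s) x - fst (u t) x) / (s - t) - fst (u' t) x) * (s - t)"
          "snd (u s) x - snd (u t) x - (s - t) * snd (u' t) x = ((snd (u s) x - snd (u t) x) / (s - t) - snd (u' t) x) * (s - t)"
          using st by (simp_all add: field_simps)
        then show ?thesis using a by (simp add: abs_mult mult_right_mono)
      qed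
      then show "\<bar>fst (u s) x - fst (u t) x - (s - t) * fst (u' t) x\<bar> \<le> e * \<bar>s - t\<bar>"
        "\<bar>snd (u s) x - snd (u t) x - (s - t) * snd (u' t) x\<bar> \<le> e * \<bar>s - t\<bar>" by auto
    qed (rule d(1))
  qed
  show ?thesis
    apply (rule that[of u'])
    using ucu ucu' derp ode init by auto
qed

lemma cont_from_der:
  assumes p0: "p > 0"
  and u': "\<And>t. t \<ge> 0 \<Longrightarrow> uc p (fst (u' t)) \<and> uc p (snd (u' t))"
  and der: "\<And>t e. t \<ge> 0 \<Longrightarrow> e > 0 \<Longrightarrow> \<exists>d>0. \<forall>s\<ge>0. \<bar>s - t\<bar> < d \<longrightarrow> (\<forall>x\<in>Zp p.
        \<bar>fst (u s) x - fst (u t) x - (s - t) * fst (u' t) x\<bar> \<le> e * \<bar>s - t\<bar> \<and>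
        \<bar>snd (u s) x - snd (u t) x - (s - t) * snd (u' t) x\<bar> \<le> e * \<bar>s - t\<bar>)"
  and t: "t \<ge> 0" and e: "e > 0"
  shows "\<exists>d>0. \<forall>s\<ge>0. \<bar>s - t\<bar> < d \<longrightarrow> (\<forall>x\<in>Zp p. \<bar>fst (u s) x - fst (u t) x\<bar> \<le> e \<and> \<bar>snd (u s) x - snd (u t) x\<bar> \<le> e)"
proof -
  obtain M1 where M1: "M1 \<ge> 0" "\<forall>x\<in>Zp p. \<bar>fst (u' t) x\<bar> \<le> M1" using bnd_nonneg[OF p0 bnd_of_uc[OF p0]] u'[OF t] by blast
  obtain M2 where M2: "M2 \<ge> 0" "\<forall>x\<in>Zp p. \<bar>snd (u' t) x\<bar> \<le> M2" using bnd_nonneg[OF p0 bnd_of_uc[OF p0]] u'[OF t] by blast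
  define M where "M = M1 + M2"
  obtain d0 where d0: "d0 > 0" "\<forall>s\<ge>0. \<bar>s - t\<bar> < d0 \<longrightarrow> (\<forall>x\<in>Zp p.
        \<bar>fst (u s) x - fst (u t) x - (s - t) * fst (u' t) x\<bar> \<le> 1 * \<bar>s - t\<bar> \<and>
        \<bar>snd (u s) x - snd (u t) x - (s - t) * snd (u' t) x\<bar> \<le> 1 * \<bar>s - t\<bar>)"
    using der[OF t, of 1] by auto
  define d where "d = min d0 (e / (M + 1))"
  have dpos: "d > 0" unfolding d_def using d0 e M1 M2 M_def by simp
  show ?thesis
  proof (intro exI conjI allI impI ballI)
    fix s x assume s: "s \<ge> 0" "\<bar>s - t\<bar> < d" and x: "x \<in> Zp p"
    have sd: "\<bar>s - t\<bar> * (M + 1) \<le> e"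
    proof -
      have "\<bar>s - t\<bar> \<le> e / (M + 1)" using s unfolding d_def by simp
      then show ?thesis using M1 M2 M_def by (simp add: field_simps)
    qed
    have a1: "\<bar>(s - t) * fst (u' t) x\<bar> \<le> \<bar>s - t\<bar> * M" unfolding abs_mult M_def
      using M1 M2 x by (intro mult_left_mono) auto
    have a2: "\<bar>(s - t) * snd (u' t) x\<bar> \<le> \<bar>s - t\<bar> * M" unfolding abs_mult M_def
      using M1 M2 x by (intro mult_left_mono) auto
    have b: "\<bar>fst (u s) x - fst (u t) x - (s - t) * fst (u' t) x\<bar> \<le> \<bar>s - t\<bar>"
      "\<bar>snd (u s) x - snd (u t) x - (s - t) * snd (u' t) x\<bar> \<le> \<bar>s - t\<bar>"
      using d0(2) s x unfolding d_def by auto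
    have dist: "\<bar>s - t\<bar> * (M + 1) = \<bar>s - t\<bar> + \<bar>s - t\<bar> * M" by (simp add: algebra_simps)
    show "\<bar>fst (u s) x - fst (u t) x\<bar> \<le> e"
      using a1 b(1) sd dist abs_triangle_ineq2[of "fst (u s) x - fst (u t) x" "(s - t) * fst (u' t) x"] by linarith
    show "\<bar>snd (u s) x - snd (u t) x\<bar> \<le> e"
      using a2 b(2) sd dist abs_triangle_ineq2[of "snd (u s) x - snd (u t) x" "(s - t) * snd (u' t) x"] by linarith
  qed (rule dpos)
qed

lemma equicont:
  fixes F :: "real \<Rightarrow> zfun"
  assumes p0: "p > 0" and ucF: "\<And>t. t \<in> {0..T} \<Longrightarrow> uc p (F t)"
  and ct: "\<And>t e. t \<in> {0..T} \<Longrightarrow> e > 0 \<Longrightarrow> \<exists>d>0. \<forall>s\<in>{0..T}. \<bar>s - t\<bar> < d \<longrightarrow> (\<forall>x\<in>Zp p. \<bar>F s x - F t x\<bar> \<le> e)"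
  and e: "e > 0"
  shows "\<exists>m. \<forall>t\<in>{0..T}. \<forall>x\<in>Zp p. \<forall>y\<in>Zp p. x m = y m \<longrightarrow> \<bar>F t x - F t y\<bar> < e"
proof (rule ccontr)
  assume "\<not> ?thesis"
  then have "\<forall>m. \<exists>t\<in>{0..T}. \<exists>x\<in>Zp p. \<exists>y\<in>Zp p. x m = y m \<and> \<bar>F t x - F t y\<bar> \<ge> e"
    by (auto simp: not_less)
  then have "\<forall>m. \<exists>q. fst q \<in> {0..T} \<and> fst (snd q) \<in> Zp p \<and> snd (snd q) \<in> Zp p \<and>
      fst (snd q) m = snd (snd q) m \<and> \<bar>F (fst q) (fst (snd q)) - F (fst q) (snd (snd q))\<bar> \<ge> e"
    by fastforce
  then have "\<exists>Q. \<forall>m. fst (Q m) \<in> {0..T} \<and> fst (snd (Q m)) \<in> Zp p \<and> snd (snd (Q m)) \<in> Zp p \<and>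
      fst (snd (Q m)) m = snd (snd (Q m)) m \<and> \<bar>F (fst (Q m)) (fst (snd (Q m))) - F (fst (Q m)) (snd (snd (Q m)))\<bar> \<ge> e"
    by (rule choice)
  then obtain Q where Q: "\<forall>m. fst (Q m) \<in> {0..T} \<and> fst (snd (Q m)) \<in> Zp p \<and> snd (snd (Q m)) \<in> Zp p \<and>
      fst (snd (Q m)) m = snd (snd (Q m)) m \<and> \<bar>F (fst (Q m)) (fst (snd (Q m))) - F (fst (Q m)) (snd (snd (Q m)))\<bar> \<ge> e"
    by blast
  define ts where "ts m = fst (Q m)" for m
  define xs where "xs m = fst (snd (Q m))" for m
  define ys where "ys m = snd (snd (Q m))" for m
  have h: "\<And>m. ts m \<in> {0..T}" "\<And>m. xs m \<in> Zp p" "\<And>m. ys m \<in> Zp p"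
    "\<And>m. xs m m = ys m m" "\<And>m. \<bar>F (ts m) (xs m) - F (ts m) (ys m)\<bar> \<ge> e"
    unfolding ts_def xs_def ys_def using Q by auto
  have "seq_compact {0..T}" by (rule compact_imp_seq_compact) (rule compact_Icc)
  then have "\<exists>l\<in>{0..T}. \<exists>r. strict_mono r \<and> (ts \<circ> r) \<longlonglongrightarrow> l"
    using h(1) unfolding seq_compact_def by blast
  then obtain tl r where tl: "tl \<in> {0..T}" "strict_mono r" "(ts \<circ> r) \<longlonglongrightarrow> tl"
    by blast
  obtain m0 where m0: "\<forall>x\<in>Zp p. \<forall>y\<in>Zp p. x m0 = y m0 \<longrightarrow> \<bar>F tl x - F tl y\<bar> < e/3"
  proof -
    have "e/3 > 0" using e by simp
    then show ?thesis using ucF[OF tl(1)] that unfolding uc_def by blast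
  qed
  obtain d where d: "d > 0" "\<forall>s\<in>{0..T}. \<bar>s - tl\<bar> < d \<longrightarrow> (\<forall>x\<in>Zp p. \<bar>F s x - F tl x\<bar> \<le> e/4)"
    using ct[OF tl(1), of "e/4"] e by auto
  obtain N where N: "\<forall>n\<ge>N. \<bar>(ts \<circ> r) n - tl\<bar> < d"
    using tl(3) d(1) unfolding LIMSEQ_iff by (auto simp: dist_real_def)
  define k where "k = max N m0"
  have rk: "r k \<ge> m0" using seq_suble[OF tl(2), of k] unfolding k_def by simp
  have close: "\<bar>ts (r k) - tl\<bar> < d" using N unfolding k_def by auto
  have "xs (r k) m0 = ys (r k) m0" using zp_agree_lower[OF p0 h(2) h(3) h(4) rk] .
  then have c1: "\<bar>F tl (xs (r k)) - F tl (ys (r k))\<bar> < e/3" using m0 h by blast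
  have c2: "\<bar>F (ts (r k)) (xs (r k)) - F tl (xs (r k))\<bar> \<le> e/4"
       "\<bar>F (ts (r k)) (ys (r k)) - F tl (ys (r k))\<bar> \<le> e/4" using d(2) close h by auto
  show False using c1 c2 h(5)[of "r k"] e by linarith
qed



lemma lip_abs: "L-lipschitz_on UNIV S \<Longrightarrow> \<bar>S a - S b\<bar> \<le> L * \<bar>a - b\<bar>"
  using lipschitz_onD[of L UNIV S a b] by (simp add: dist_real_def)

lemma comp_lip:
  assumes p0: "p > 0" and w1: "uc p w1" and w2: "uc p w2"
  and M1: "\<forall>z\<in>Zp p. \<bar>w1 z\<bar> \<le> M1" and M2: "\<forall>z\<in>Zp p. \<bar>w2 z\<bar> \<le> M2"
  and L: "L-lipschitz_on UNIV S"
  and f1: "uc p f1" and f2: "uc p f2" and g1: "uc p g1" and g2: "uc p g2" and y: "y \<in> Zp p"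
  and c: "\<forall>x\<in>Zp p. \<bar>f1 x - g1 x\<bar> \<le> c \<and> \<bar>f2 x - g2 x\<bar> \<le> c"
  shows "\<bar>S (conv p w1 f1 y - conv p w2 f2 y + h) - S (conv p w1 g1 y - conv p w2 g2 y + h)\<bar> \<le> L * (M1 + M2) * c"
proof -
  have L0: "L \<ge> 0" using L lipschitz_on_nonneg by blast
  have a: "\<bar>conv p w1 f1 y - conv p w1 g1 y\<bar> \<le> M1 * c"
    by (rule conv_diff[OF p0 w1 f1 g1 y]) (use c M1 in auto)
  have b: "\<bar>conv p w2 f2 y - conv p w2 g2 y\<bar> \<le> M2 * c"
    by (rule conv_diff[OF p0 w2 f2 g2 y]) (use c M2 in auto)
  have "\<bar>(conv p w1 f1 y - conv p w2 f2 y + h) - (conv p w1 g1 y - conv p w2 g2 y + h)\<bar> \<le> M1 * c + M2 * c"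
    using a b by linarith
  then have "L * \<bar>(conv p w1 f1 y - conv p w2 f2 y + h) - (conv p w1 g1 y - conv p w2 g2 y + h)\<bar> \<le> L * (M1 * c + M2 * c)"
    by (rule mult_left_mono) (rule L0)
  then have X: "\<bar>S (conv p w1 f1 y - conv p w2 f2 y + h) - S (conv p w1 g1 y - conv p w2 g2 y + h)\<bar> \<le> L * (M1 * c + M2 * c)"
    by (rule order_trans[OF lip_abs[OF L]])
  have "L * (M1 * c + M2 * c) = L * (M1 + M2) * c" by (simp add: algebra_simps)
  then show ?thesis using X by (simp add: algebra_simps)
qed

lemma comp_uc:
  assumes p0: "p > 0" and w1: "uc p w1" and w2: "uc p w2" and L: "L-lipschitz_on UNIV S"
  and f1: "uc p f1" and f2: "uc p f2" and h: "uc p h"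
  shows "uc p (\<lambda>x. S (conv p w1 f1 x - conv p w2 f2 x + h x))"
proof -
  have L0: "L \<ge> 0" using L lipschitz_on_nonneg by blast
  have "uc p (\<lambda>x. (conv p w1 f1 x - conv p w2 f2 x) + h x)"
    by (intro uc_add[OF p0] uc_diff[OF p0] conv_uc[OF p0] w1 w2 f1 f2 h)
  then show ?thesis using uc_lip[OF _ L0 lip_abs[OF L]] by simp
qed

lemma comp_tcont:
  fixes f1 f2 hh :: "real \<Rightarrow> zfun" and e :: real
  assumes p0: "p > 0" and w1: "uc p w1" and w2: "uc p w2"
  and M1: "\<forall>z\<in>Zp p. \<bar>w1 z\<bar> \<le> M1" and M2: "\<forall>z\<in>Zp p. \<bar>w2 z\<bar> \<le> M2" and M10: "M1 \<ge> 0" and M20: "M2 \<ge> 0"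
  and L: "L-lipschitz_on UNIV S"
  and ucf: "\<And>s. s \<ge> 0 \<Longrightarrow> uc p (f1 s) \<and> uc p (f2 s)"
  and ct: "\<And>e. e > 0 \<Longrightarrow> \<exists>d>0. \<forall>s\<ge>0. \<bar>s - t\<bar> < d \<longrightarrow> (\<forall>x\<in>Zp p. \<bar>f1 s x - f1 t x\<bar> \<le> e \<and> \<bar>f2 s x - f2 t x\<bar> \<le> e)"
  and cth: "\<And>e. e > 0 \<Longrightarrow> \<exists>d>0. \<forall>s\<ge>0. \<bar>s - t\<bar> < d \<longrightarrow> (\<forall>x\<in>Zp p. \<bar>hh s x - hh t x\<bar> \<le> e)"
  and t: "t \<ge> 0" and e: "e > 0"
  shows "\<exists>d>0. \<forall>s\<ge>0. \<bar>s - t\<bar> < d \<longrightarrow> (\<forall>x\<in>Zp p.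
     \<bar>S (conv p w1 (f1 s) x - conv p w2 (f2 s) x + hh s x) - S (conv p w1 (f1 t) x - conv p w2 (f2 t) x + hh t x)\<bar> \<le> e)"
proof -
  have L0: "L \<ge> 0" using L lipschitz_on_nonneg by blast
  define Q where "Q = L * (M1 + M2 + 1) + 1"
  have LM: "L * (M1 + M2 + 1) \<ge> 0" using L0 M10 M20 by simp
  have Q: "Q > 0" "L * (M1 + M2 + 1) \<le> Q" unfolding Q_def using LM by linarith+
  define \<eta> where "\<eta> = e / Q"
  have eta: "\<eta> > 0" unfolding \<eta>_def using e Q by simp
  obtain d1 where d1: "d1 > 0" "\<forall>s\<ge>0. \<bar>s - t\<bar> < d1 \<longrightarrow> (\<forall>x\<in>Zp p. \<bar>f1 s x - f1 t x\<bar> \<le> \<eta> \<and> \<bar>f2 s x - f2 t x\<bar> \<le> \<eta>)"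
    using ct[OF eta] by blast
  obtain d2 where d2: "d2 > 0" "\<forall>s\<ge>0. \<bar>s - t\<bar> < d2 \<longrightarrow> (\<forall>x\<in>Zp p. \<bar>hh s x - hh t x\<bar> \<le> \<eta>)"
    using cth[OF eta] by blast
  show ?thesis
  proof (intro exI conjI allI impI ballI)
    show "min d1 d2 > 0" using d1 d2 by simp
    fix s x assume s: "s \<ge> 0" "\<bar>s - t\<bar> < min d1 d2" and x: "x \<in> Zp p"
    have a: "\<bar>conv p w1 (f1 s) x - conv p w1 (f1 t) x\<bar> \<le> M1 * \<eta>"
      by (rule conv_diff[OF p0 w1 _ _ x]) (use ucf s t d1 M1 in auto)
    have b: "\<bar>conv p w2 (f2 s) x - conv p w2 (f2 t) x\<bar> \<le> M2 * \<eta>"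
      by (rule conv_diff[OF p0 w2 _ _ x]) (use ucf s t d1 M2 in auto)
    have c: "\<bar>hh s x - hh t x\<bar> \<le> \<eta>" using d2 s x by auto
    have "\<bar>(conv p w1 (f1 s) x - conv p w2 (f2 s) x + hh s x) - (conv p w1 (f1 t) x - conv p w2 (f2 t) x + hh t x)\<bar>
        \<le> (M1 + M2 + 1) * \<eta>" using a b c by (simp add: algebra_simps)
    then have "L * \<bar>(conv p w1 (f1 s) x - conv p w2 (f2 s) x + hh s x) - (conv p w1 (f1 t) x - conv p w2 (f2 t) x + hh t x)\<bar>
        \<le> L * ((M1 + M2 + 1) * \<eta>)" by (rule mult_left_mono) (rule L0)
    also have "\<dots> = (L * (M1 + M2 + 1)) * \<eta>" by simp
    also have "\<dots> \<le> Q * \<eta>" using Q eta by (intro mult_right_mono) auto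
    also have "\<dots> = e" unfolding \<eta>_def using Q by simp
    finally show "\<bar>S (conv p w1 (f1 s) x - conv p w2 (f2 s) x + hh s x) - S (conv p w1 (f1 t) x - conv p w2 (f2 t) x + hh t x)\<bar> \<le> e"
      using lip_abs[OF L] order_trans by blast
  qed
qed

lemma ctf_uc: assumes p1: "p > 1" and h: "cont_time_fun p h" and s: "s \<ge> 0" shows "uc p (h s)"
proof -
  have "zp_continuous p (h s)" using h s unfolding cont_time_fun_def by blast
  moreover have "p > 0" using p1 by simp
  ultimately show ?thesis using uc_of_lcont lcont_of_cont[OF p1] by blast
qed

lemma ctf_pw: assumes p1: "p > 1" and h: "cont_time_fun p h" and t: "t \<ge> 0" and e: "e > 0"
  shows "\<exists>d>0. \<forall>s\<ge>0. \<bar>s - t\<bar> < d \<longrightarrow> (\<forall>x\<in>Zp p. \<bar>h s x - h t x\<bar> \<le> e)"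
proof -
  have p0: "p > 0" using p1 by simp
  have "((\<lambda>s'. supn p (\<lambda>x. h s' x - h t x)) \<longlongrightarrow> 0) (at t within {0..})"
    using h t unfolding cont_time_fun_def by blast
  then obtain d where d: "d > 0" "\<forall>s\<in>{0..}. 0 < dist s t \<and> dist s t < d \<longrightarrow> dist (supn p (\<lambda>x. h s x - h t x)) 0 < e"
    using e unfolding Lim_within by blast
  show ?thesis
  proof (intro exI conjI allI impI ballI)
    fix s x assume s: "s \<ge> 0" "\<bar>s - t\<bar> < d" and x: "x \<in> Zp p"
    show "\<bar>h s x - h t x\<bar> \<le> e"
    proof (cases "s = t")
      case True then show ?thesis using e by simp
    next
      case False
      then have "supn p (\<lambda>x. h s x - h t x) < e" using d(2) s by (auto simp: dist_real_def)
      moreover have "bnd p (\<lambda>x. h s x - h t x)"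
        using bnd_diff bnd_of_uc[OF p0 ctf_uc[OF p1 h]] s t by blast
      ultimately show ?thesis using supn_ge[of p _ x] x by fastforce
    qed
  qed (rule d(1))
qed



theorem theorem2:
  fixes p :: nat and \<tau> :: real and SE SI :: "real \<Rightarrow> real"
    and wEE wEI wIE wII E0 I0 :: zfun and hE hI :: "real \<Rightarrow> zfun"
    and u :: "real \<Rightarrow> xel" and ul :: "nat \<Rightarrow> real \<Rightarrow> xel"
  assumes "prime p" and "\<tau> > 0"
    and "bounded (range SE)" and "\<exists>L. L-lipschitz_on UNIV SE" and "SE 0 = 0"
    and "bounded (range SI)" and "\<exists>L. L-lipschitz_on UNIV SI" and "SI 0 = 0"
    and "zp_continuous p wEE" and "zp_continuous p wEI"
    and "zp_continuous p wIE" and "zp_continuous p wII"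
    and "cont_time_fun p hE" and "cont_time_fun p hI"
    and "in_X p (E0, I0)"
    and "is_C1_solution p \<tau> (Hop p SE SI wEE wEI wIE wII hE hI) (E0, I0) u"
    and "\<And>l. l \<ge> 1 \<Longrightarrow> (\<forall>t\<ge>0. in_Xl p l (ul l t)) \<and>
           is_C1_solution p \<tau> (\<lambda>f s. Pl p l (Hop p SE SI wEE wEI wIE wII hE hI f s))
             (Pl p l (E0, I0)) (ul l)"
  shows "\<forall>T>0. (\<lambda>l. SUP t\<in>{0..T}. Xnorm p (Xsub (ul l t) (u t))) \<longlonglongrightarrow> 0"
proof (intro allI impI)
  fix T :: real assume T: "T > 0"
  have p1: "p > 1" using assms(1) prime_gt_1_nat by blast
  have p0: "p > 0" using p1 by simp
  have tau: "\<tau> > 0" by (rule assms(2))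
  obtain LE where LE: "LE-lipschitz_on UNIV SE" using assms(4) by blast
  obtain LI where LI: "LI-lipschitz_on UNIV SI" using assms(7) by blast
  have LE0: "LE \<ge> 0" using LE lipschitz_on_nonneg by blast
  have LI0: "LI \<ge> 0" using LI lipschitz_on_nonneg by blast
  have ucc: "uc p f" if "zp_continuous p f" for f
    using uc_of_lcont[OF p0 lcont_of_cont[OF p1 that]] .
  have uEE: "uc p wEE" and uEI: "uc p wEI" and uIE: "uc p wIE" and uII: "uc p wII"
    using ucc assms(9-12) by auto
  obtain MEE where MEE: "MEE \<ge> 0" "\<forall>z\<in>Zp p. \<bar>wEE z\<bar> \<le> MEE" using bnd_nonneg[OF p0 bnd_of_uc[OF p0 uEE]] by blast
  obtain MEI where MEI: "MEI \<ge> 0" "\<forall>z\<in>Zp p. \<bar>wEI z\<bar> \<le> MEI" using bnd_nonneg[OF p0 bnd_of_uc[OF p0 uEI]] by blast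
  obtain MIE where MIE: "MIE \<ge> 0" "\<forall>z\<in>Zp p. \<bar>wIE z\<bar> \<le> MIE" using bnd_nonneg[OF p0 bnd_of_uc[OF p0 uIE]] by blast
  obtain MII where MII: "MII \<ge> 0" "\<forall>z\<in>Zp p. \<bar>wII z\<bar> \<le> MII" using bnd_nonneg[OF p0 bnd_of_uc[OF p0 uII]] by blast
  define K where "K = max (LE * (MEE + MEI)) (LI * (MIE + MII))"
  have "0 \<le> LE * (MEE + MEI)" using LE0 MEE(1) MEI(1) by simp
  then have K0: "K \<ge> 0" unfolding K_def by (rule order_trans[OF _ max.cobounded1])
  have uhE: "\<And>s. s \<ge> 0 \<Longrightarrow> uc p (hE s)" using ctf_uc[OF p1 assms(13)] by blast
  have uhI: "\<And>s. s \<ge> 0 \<Longrightarrow> uc p (hI s)" using ctf_uc[OF p1 assms(14)] by blast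
  have ucE0: "uc p E0" and ucI0: "uc p I0" using assms(15) ucc unfolding in_X_def by auto
  define H where "H = Hop p SE SI wEE wEI wIE wII hE hI"
  have Hfst: "fst (H f s) = (\<lambda>x. SE (conv p wEE (fst f) x - conv p wEI (snd f) x + hE s x))" for f s
    unfolding H_def Hop_def by simp
  have Hsnd: "snd (H f s) = (\<lambda>x. SI (conv p wIE (fst f) x - conv p wII (snd f) x + hI s x))" for f s
    unfolding H_def Hop_def by simp
  obtain u' where U1: "\<And>t. t \<ge> 0 \<Longrightarrow> uc p (fst (u t)) \<and> uc p (snd (u t))"
    and U2: "\<And>t. t \<ge> 0 \<Longrightarrow> uc p (fst (u' t)) \<and> uc p (snd (u' t))"
    and U3: "\<And>t e. t \<ge> 0 \<Longrightarrow> e > 0 \<Longrightarrow> \<exists>d>0. \<forall>s\<ge>0. \<bar>s - t\<bar> < d \<longrightarrow> (\<forall>x\<in>Zp p.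
        \<bar>fst (u s) x - fst (u t) x - (s - t) * fst (u' t) x\<bar> \<le> e * \<bar>s - t\<bar> \<and>
        \<bar>snd (u s) x - snd (u t) x - (s - t) * snd (u' t) x\<bar> \<le> e * \<bar>s - t\<bar>)"
    and U4: "\<And>t x. t \<ge> 0 \<Longrightarrow> x \<in> Zp p \<Longrightarrow> fst (u' t) x + fst (u t) x / \<tau> = fst (H (u t) t) x / \<tau> \<and>
            snd (u' t) x + snd (u t) x / \<tau> = snd (H (u t) t) x / \<tau>"
    and U5: "\<And>x. x \<in> Zp p \<Longrightarrow> fst (u 0) x = fst (E0, I0) x \<and> snd (u 0) x = snd (E0, I0) x"
    using C1_unpack[OF p1 assms(16)[folded H_def]] by blast
  have NCu: "\<And>t e. t \<ge> 0 \<Longrightarrow> e > 0 \<Longrightarrow> \<exists>d>0. \<forall>s\<ge>0. \<bar>s - t\<bar> < d \<longrightarrow> (\<forall>x\<in>Zp p. \<bar>fst (u s) x - fst (u t) x\<bar> \<le> e \<and> \<bar>snd (u s) x - snd (u t) x\<bar> \<le> e)"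
    using cont_from_der[OF p0 U2 U3] by blast
  define FE where "FE t = fst (H (u t) t)" for t
  define FI where "FI t = snd (H (u t) t)" for t
  have ucFE: "uc p (FE t)" if "t \<ge> 0" for t
    unfolding FE_def Hfst using comp_uc[OF p0 uEE uEI LE] U1[OF that] uhE[OF that] by blast
  have ucFI: "uc p (FI t)" if "t \<ge> 0" for t
    unfolding FI_def Hsnd using comp_uc[OF p0 uIE uII LI] U1[OF that] uhI[OF that] by blast
  have ctFE: "\<exists>d>0. \<forall>s\<ge>0. \<bar>s - t\<bar> < d \<longrightarrow> (\<forall>x\<in>Zp p. \<bar>FE s x - FE t x\<bar> \<le> e)"
    if "t \<ge> 0" "e > 0" for t e
    unfolding FE_def Hfst
    using comp_tcont[OF p0 uEE uEI MEE(2) MEI(2) MEE(1) MEI(1) LE, of "\<lambda>s. fst (u s)" "\<lambda>s. snd (u s)" t hE e]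
      U1 NCu[OF that(1)] ctf_pw[OF p1 assms(13) that(1)] that by blast
  have ctFI: "\<exists>d>0. \<forall>s\<ge>0. \<bar>s - t\<bar> < d \<longrightarrow> (\<forall>x\<in>Zp p. \<bar>FI s x - FI t x\<bar> \<le> e)"
    if "t \<ge> 0" "e > 0" for t e
    unfolding FI_def Hsnd
    using comp_tcont[OF p0 uIE uII MIE(2) MII(2) MIE(1) MII(1) LI, of "\<lambda>s. fst (u s)" "\<lambda>s. snd (u s)" t hI e]
      U1 NCu[OF that(1)] ctf_pw[OF p1 assms(14) that(1)] that by blast
  have EQE: "\<exists>m. \<forall>t\<in>{0..T}. \<forall>x\<in>Zp p. \<forall>y\<in>Zp p. x m = y m \<longrightarrow> \<bar>FE t x - FE t y\<bar> < e" if "e > 0" for e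
  proof (rule equicont[OF p0 _ _ that])
    show "\<And>t. t \<in> {0..T} \<Longrightarrow> uc p (FE t)" using ucFE by auto
    show "\<exists>d>0. \<forall>s\<in>{0..T}. \<bar>s - t\<bar> < d \<longrightarrow> (\<forall>x\<in>Zp p. \<bar>FE s x - FE t x\<bar> \<le> e')"
      if "t \<in> {0..T}" "e' > 0" for t e'
      using ctFE[of t e'] that by fastforce
  qed
  have EQI: "\<exists>m. \<forall>t\<in>{0..T}. \<forall>x\<in>Zp p. \<forall>y\<in>Zp p. x m = y m \<longrightarrow> \<bar>FI t x - FI t y\<bar> < e" if "e > 0" for e
  proof (rule equicont[OF p0 _ _ that])
    show "\<And>t. t \<in> {0..T} \<Longrightarrow> uc p (FI t)" using ucFI by auto
    show "\<exists>d>0. \<forall>s\<in>{0..T}. \<bar>s - t\<bar> < d \<longrightarrow> (\<forall>x\<in>Zp p. \<bar>FI s x - FI t x\<bar> \<le> e')"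
      if "t \<in> {0..T}" "e' > 0" for t e'
      using ctFI[of t e'] that by fastforce
  qed
  show "(\<lambda>l. SUP t\<in>{0..T}. Xnorm p (Xsub (ul l t) (u t))) \<longlonglongrightarrow> 0"
  proof (rule LIMSEQ_I)
    fix r :: real assume r: "r > 0"
    define C where "C = exp (K * T / \<tau>)"
    have C0: "C > 0" unfolding C_def by simp
    define \<delta> where "\<delta> = r / (2 * C)"
    have dpos: "\<delta> > 0" unfolding \<delta>_def using r C0 by simp
    have d2: "\<delta> / 2 > 0" using dpos by simp
    obtain m1 where m1: "\<forall>t\<in>{0..T}. \<forall>x\<in>Zp p. \<forall>y\<in>Zp p. x m1 = y m1 \<longrightarrow> \<bar>FE t x - FE t y\<bar> < \<delta> / 2"
      using EQE[OF d2] by blast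
    obtain m2 where m2: "\<forall>t\<in>{0..T}. \<forall>x\<in>Zp p. \<forall>y\<in>Zp p. x m2 = y m2 \<longrightarrow> \<bar>FI t x - FI t y\<bar> < \<delta> / 2"
      using EQI[OF d2] by blast
    obtain m3 where m3: "\<forall>x\<in>Zp p. \<forall>y\<in>Zp p. x m3 = y m3 \<longrightarrow> \<bar>E0 x - E0 y\<bar> < \<delta> / 2"
      using ucE0 d2 unfolding uc_def by blast
    obtain m4 where m4: "\<forall>x\<in>Zp p. \<forall>y\<in>Zp p. x m4 = y m4 \<longrightarrow> \<bar>I0 x - I0 y\<bar> < \<delta> / 2"
      using ucI0 d2 unfolding uc_def by blast
    show "\<exists>no. \<forall>l\<ge>no. norm ((SUP t\<in>{0..T}. Xnorm p (Xsub (ul l t) (u t))) - 0) < r"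
    proof (intro exI allI impI)
      fix l assume l: "max 1 (max (max m1 m2) (max m3 m4)) \<le> l"
      then have l1: "l \<ge> 1" and lm: "m1 \<le> l" "m2 \<le> l" "m3 \<le> l" "m4 \<le> l" by auto
      have solv: "is_C1_solution p \<tau> (\<lambda>f s. Pl p l (H f s)) (Pl p l (E0, I0)) (ul l)"
        using assms(17)[OF l1] unfolding H_def by blast
      obtain v' where V1: "\<And>t. t \<ge> 0 \<Longrightarrow> uc p (fst (ul l t)) \<and> uc p (snd (ul l t))"
        and V2: "\<And>t. t \<ge> 0 \<Longrightarrow> uc p (fst (v' t)) \<and> uc p (snd (v' t))"
        and V3: "\<And>t e. t \<ge> 0 \<Longrightarrow> e > 0 \<Longrightarrow> \<exists>d>0. \<forall>s\<ge>0. \<bar>s - t\<bar> < d \<longrightarrow> (\<forall>x\<in>Zp p.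
            \<bar>fst (ul l s) x - fst (ul l t) x - (s - t) * fst (v' t) x\<bar> \<le> e * \<bar>s - t\<bar> \<and>
            \<bar>snd (ul l s) x - snd (ul l t) x - (s - t) * snd (v' t) x\<bar> \<le> e * \<bar>s - t\<bar>)"
        and V4: "\<And>t x. t \<ge> 0 \<Longrightarrow> x \<in> Zp p \<Longrightarrow> fst (v' t) x + fst (ul l t) x / \<tau> = fst (Pl p l (H (ul l t) t)) x / \<tau> \<and>
                snd (v' t) x + snd (ul l t) x / \<tau> = snd (Pl p l (H (ul l t) t)) x / \<tau>"
        and V5: "\<And>x. x \<in> Zp p \<Longrightarrow> fst (ul l 0) x = fst (Pl p l (E0, I0)) x \<and> snd (ul l 0) x = snd (Pl p l (E0, I0)) x"
        using C1_unpack[OF p1 solv] by blast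
      have NCv: "\<And>t e. t \<ge> 0 \<Longrightarrow> e > 0 \<Longrightarrow> \<exists>d>0. \<forall>s\<ge>0. \<bar>s - t\<bar> < d \<longrightarrow> (\<forall>x\<in>Zp p. \<bar>fst (ul l s) x - fst (ul l t) x\<bar> \<le> e \<and> \<bar>snd (ul l s) x - snd (ul l t) x\<bar> \<le> e)"
        using cont_from_der[OF p0 V2 V3] by blast
      define \<phi> where "\<phi> t = Xnorm p (Xsub (ul l t) (u t))" for t
      define DD where "DD t a = (if snd a then fst (ul l t) (fst a) - fst (u t) (fst a) else snd (ul l t) (fst a) - snd (u t) (fst a))" for t a
      define DD' where "DD' t a = (if snd a then fst (v' t) (fst a) - fst (u' t) (fst a) else snd (v' t) (fst a) - snd (u' t) (fst a))" for t a
      define GG where "GG t a = (if snd a then fst (Pl p l (H (ul l t) t)) (fst a) - fst (H (u t) t) (fst a)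
                                else snd (Pl p l (H (ul l t) t)) (fst a) - snd (H (u t) t) (fst a))" for t a
      define AA where "AA = Zp p \<times> (UNIV :: bool set)"
      have H1': "\<bar>fst (ul l t) x - fst (u t) x\<bar> \<le> \<phi> t \<and> \<bar>snd (ul l t) x - snd (u t) x\<bar> \<le> \<phi> t"
        if "t \<ge> 0" "x \<in> Zp p" for t x
      proof -
        have b: "bnd p (fst (Xsub (ul l t) (u t)))" "bnd p (snd (Xsub (ul l t) (u t)))"
          unfolding Xsub_def using V1[OF that(1)] U1[OF that(1)] bnd_of_uc[OF p0]
          by (auto intro!: bnd_diff)
        show ?thesis using XN[OF b that(2)] unfolding \<phi>_def Xsub_def by simp
      qed
      have H1: "\<bar>DD t a\<bar> \<le> \<phi> t" if "t \<in> {0..T}" "a \<in> AA" for t a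
        using H1'[of t "fst a"] that unfolding DD_def AA_def by (auto split: if_splits)
      have H2: "\<phi> t \<le> c" if "t \<in> {0..T}" "\<And>a. a \<in> AA \<Longrightarrow> \<bar>DD t a\<bar> \<le> c" for t c
        unfolding \<phi>_def
      proof (rule Xnorm_le[OF p0])
        fix x assume x: "x \<in> Zp p"
        show "\<bar>fst (Xsub (ul l t) (u t)) x\<bar> \<le> c \<and> \<bar>snd (Xsub (ul l t) (u t)) x\<bar> \<le> c"
          using that(2)[of "(x, True)"] that(2)[of "(x, False)"] x unfolding AA_def DD_def Xsub_def by auto
      qed
      have H3: "\<exists>d>0. \<forall>s\<in>{0..T}. \<bar>s - t\<bar> < d \<longrightarrow> (\<forall>a\<in>AA. \<bar>DD s a - DD t a\<bar> \<le> e)"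
        if "t \<in> {0..T}" "e > 0" for t e
      proof -
        have t0: "t \<ge> 0" using that by simp
        have e2: "e/2 > 0" using that by simp
        obtain da where da: "da > 0" "\<forall>s\<ge>0. \<bar>s - t\<bar> < da \<longrightarrow> (\<forall>x\<in>Zp p. \<bar>fst (u s) x - fst (u t) x\<bar> \<le> e/2 \<and> \<bar>snd (u s) x - snd (u t) x\<bar> \<le> e/2)"
          using NCu[OF t0 e2] by blast
        obtain db where db: "db > 0" "\<forall>s\<ge>0. \<bar>s - t\<bar> < db \<longrightarrow> (\<forall>x\<in>Zp p. \<bar>fst (ul l s) x - fst (ul l t) x\<bar> \<le> e/2 \<and> \<bar>snd (ul l s) x - snd (ul l t) x\<bar> \<le> e/2)"
          using NCv[OF t0 e2] by blast
        show ?thesis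
        proof (intro exI conjI ballI impI)
          show "min da db > 0" using da db by simp
          fix s a assume s: "s \<in> {0..T}" "\<bar>s - t\<bar> < min da db" and a: "a \<in> AA"
          have x: "fst a \<in> Zp p" using a unfolding AA_def by auto
          have s0: "s \<ge> 0" using s by simp
          have sda: "\<bar>s - t\<bar> < da" and sdb: "\<bar>s - t\<bar> < db" using s(2) by auto
          have f: "\<bar>fst (u s) (fst a) - fst (u t) (fst a)\<bar> \<le> e/2" "\<bar>snd (u s) (fst a) - snd (u t) (fst a)\<bar> \<le> e/2"
            using da(2) s0 sda x by blast+
          have g: "\<bar>fst (ul l s) (fst a) - fst (ul l t) (fst a)\<bar> \<le> e/2" "\<bar>snd (ul l s) (fst a) - snd (ul l t) (fst a)\<bar> \<le> e/2"
            using db(2) s0 sdb x by blast+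
          show "\<bar>DD s a - DD t a\<bar> \<le> e"
          proof (cases "snd a")
            case True
            have "DD s a - DD t a = (fst (ul l s) (fst a) - fst (ul l t) (fst a)) - (fst (u s) (fst a) - fst (u t) (fst a))"
              unfolding DD_def using True by simp
            then show ?thesis using f(1) g(1) by linarith
          next
            case False
            have "DD s a - DD t a = (snd (ul l s) (fst a) - snd (ul l t) (fst a)) - (snd (u s) (fst a) - snd (u t) (fst a))"
              unfolding DD_def using False by simp
            then show ?thesis using f(2) g(2) by linarith
          qed
        qed
      qed
      have H4: "\<exists>d>0. \<forall>s\<in>{0..<t}. t - s < d \<longrightarrow> (\<forall>a\<in>AA. \<bar>DD t a - DD s a - (t - s) * DD' t a\<bar> \<le> e * (t - s))"
        if "t \<in> {0<..T}" "e > 0" for t e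
      proof -
        have t0: "t \<ge> 0" using that by simp
        have e2: "e/2 > 0" using that by simp
        obtain da where da: "da > 0" "\<forall>s\<ge>0. \<bar>s - t\<bar> < da \<longrightarrow> (\<forall>x\<in>Zp p.
            \<bar>fst (u s) x - fst (u t) x - (s - t) * fst (u' t) x\<bar> \<le> e/2 * \<bar>s - t\<bar> \<and>
            \<bar>snd (u s) x - snd (u t) x - (s - t) * snd (u' t) x\<bar> \<le> e/2 * \<bar>s - t\<bar>)"
          using U3[OF t0 e2] by blast
        obtain db where db: "db > 0" "\<forall>s\<ge>0. \<bar>s - t\<bar> < db \<longrightarrow> (\<forall>x\<in>Zp p.
            \<bar>fst (ul l s) x - fst (ul l t) x - (s - t) * fst (v' t) x\<bar> \<le> e/2 * \<bar>s - t\<bar> \<and>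
            \<bar>snd (ul l s) x - snd (ul l t) x - (s - t) * snd (v' t) x\<bar> \<le> e/2 * \<bar>s - t\<bar>)"
          using V3[OF t0 e2] by blast
        show ?thesis
        proof (intro exI conjI ballI impI)
          show "min da db > 0" using da db by simp
          fix s a assume s: "s \<in> {0..<t}" "t - s < min da db" and a: "a \<in> AA"
          have x: "fst a \<in> Zp p" using a unfolding AA_def by auto
          have s0: "s \<ge> 0" and st: "\<bar>s - t\<bar> = t - s" "\<bar>s - t\<bar> < da" "\<bar>s - t\<bar> < db" using s by auto
          note A1 = da(2)[rule_format, OF s0 st(2) x] and B1 = db(2)[rule_format, OF s0 st(3) x]
          show "\<bar>DD t a - DD s a - (t - s) * DD' t a\<bar> \<le> e * (t - s)"
          proof (cases "snd a")
            case True
            have "DD t a - DD s a - (t - s) * DD' t a =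
               (fst (u s) (fst a) - fst (u t) (fst a) - (s - t) * fst (u' t) (fst a)) -
               (fst (ul l s) (fst a) - fst (ul l t) (fst a) - (s - t) * fst (v' t) (fst a))"
              unfolding DD_def DD'_def using True by (simp add: algebra_simps)
            then show ?thesis using A1 B1 st(1) by (simp only:) linarith
          next
            case False
            have "DD t a - DD s a - (t - s) * DD' t a =
               (snd (u s) (fst a) - snd (u t) (fst a) - (s - t) * snd (u' t) (fst a)) -
               (snd (ul l s) (fst a) - snd (ul l t) (fst a) - (s - t) * snd (v' t) (fst a))"
              unfolding DD_def DD'_def using False by (simp add: algebra_simps)
            then show ?thesis using A1 B1 st(1) by (simp only:) linarith
          qed
        qed
      qed
      have H5: "\<tau> * DD' t a = - DD t a + GG t a" if "t \<in> {0..T}" "a \<in> AA" for t a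
      proof -
        have t0: "t \<ge> 0" and x: "fst a \<in> Zp p" using that unfolding AA_def by auto
        note u4 = U4[OF t0 x] and v4 = V4[OF t0 x]
        have e1: "\<tau> * fst (u' t) (fst a) = fst (H (u t) t) (fst a) - fst (u t) (fst a)"
             "\<tau> * snd (u' t) (fst a) = snd (H (u t) t) (fst a) - snd (u t) (fst a)"
          using u4 tau by (simp_all add: field_simps)
        have e2: "\<tau> * fst (v' t) (fst a) = fst (Pl p l (H (ul l t) t)) (fst a) - fst (ul l t) (fst a)"
             "\<tau> * snd (v' t) (fst a) = snd (Pl p l (H (ul l t) t)) (fst a) - snd (ul l t) (fst a)"
          using v4 tau by (simp_all add: field_simps)
        show ?thesis unfolding DD_def DD'_def GG_def using e1 e2 by (simp add: algebra_simps)
      qed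
      have phi0: "\<phi> t \<ge> 0" if "t \<ge> 0" for t
        using H1'[OF that zp_zero_in[OF p0]] by linarith
      have H6: "\<bar>GG t a\<bar> \<le> K * \<phi> t + \<delta> / 2" if "t \<in> {0..T}" "a \<in> AA" for t a
      proof -
        have t0: "t \<ge> 0" and x: "fst a \<in> Zp p" using that unfolding AA_def by auto
        define y where "y = zp_of_int p (fst a l)"
        have y: "y \<in> Zp p" unfolding y_def by (rule zp_of_int_in[OF p0])
        have ym: "y m1 = fst a m1" "y m2 = fst a m2" unfolding y_def using zoi_agree[OF p0 x] lm by auto
        have c: "\<forall>x\<in>Zp p. \<bar>fst (ul l t) x - fst (u t) x\<bar> \<le> \<phi> t \<and> \<bar>snd (ul l t) x - snd (u t) x\<bar> \<le> \<phi> t"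
          using H1'[OF t0] by blast
        have P1: "fst (Pl p l q) (fst a) = fst q y" "snd (Pl p l q) (fst a) = snd q y" for q
          unfolding Pl_def y_def using Pl1_eval[OF p1 x] by auto
        show ?thesis
        proof (cases "snd a")
          case True
          have "\<bar>fst (H (ul l t) t) y - fst (H (u t) t) y\<bar> \<le> LE * (MEE + MEI) * \<phi> t"
            unfolding Hfst using comp_lip[OF p0 uEE uEI MEE(2) MEI(2) LE _ _ _ _ y c] V1[OF t0] U1[OF t0] by blast
          also have "\<dots> \<le> K * \<phi> t" unfolding K_def using phi0[OF t0] by (intro mult_right_mono) auto
          finally have a1: "\<bar>fst (H (ul l t) t) y - fst (H (u t) t) y\<bar> \<le> K * \<phi> t" .
          have a2: "\<bar>FE t y - FE t (fst a)\<bar> < \<delta> / 2" using m1 that(1) y x ym by blast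
          have "GG t a = (fst (H (ul l t) t) y - fst (H (u t) t) y) + (FE t y - FE t (fst a))"
            unfolding GG_def FE_def using True P1 by simp
          then show ?thesis using a1 a2 by linarith
        next
          case False
          have "\<bar>snd (H (ul l t) t) y - snd (H (u t) t) y\<bar> \<le> LI * (MIE + MII) * \<phi> t"
            unfolding Hsnd using comp_lip[OF p0 uIE uII MIE(2) MII(2) LI _ _ _ _ y c] V1[OF t0] U1[OF t0] by blast
          also have "\<dots> \<le> K * \<phi> t" unfolding K_def using phi0[OF t0] by (intro mult_right_mono) auto
          finally have a1: "\<bar>snd (H (ul l t) t) y - snd (H (u t) t) y\<bar> \<le> K * \<phi> t" .
          have a2: "\<bar>FI t y - FI t (fst a)\<bar> < \<delta> / 2" using m2 that(1) y x ym by blast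
          have "GG t a = (snd (H (ul l t) t) y - snd (H (u t) t) y) + (FI t y - FI t (fst a))"
            unfolding GG_def FI_def using False P1 by simp
          then show ?thesis using a1 a2 by linarith
        qed
      qed
      have z0: "(0::real) \<in> {0..T}" using T by simp
      have init: "\<phi> 0 \<le> \<delta> / 2"
      proof (rule H2[OF z0])
        fix a assume a: "a \<in> AA"
        then have x: "fst a \<in> Zp p" unfolding AA_def by auto
        define y where "y = zp_of_int p (fst a l)"
        have y: "y \<in> Zp p" unfolding y_def by (rule zp_of_int_in[OF p0])
        have ym: "y m3 = fst a m3" "y m4 = fst a m4" unfolding y_def using zoi_agree[OF p0 x] lm by auto
        have "fst (ul l 0) (fst a) = E0 y" "snd (ul l 0) (fst a) = I0 y"
          using V5[OF x] Pl1_eval[OF p1 x] unfolding Pl_def y_def by auto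
        moreover have "fst (u 0) (fst a) = E0 (fst a)" "snd (u 0) (fst a) = I0 (fst a)" using U5[OF x] by auto
        moreover have "\<bar>E0 y - E0 (fst a)\<bar> < \<delta>/2" "\<bar>I0 y - I0 (fst a)\<bar> < \<delta>/2" using m3 m4 x y ym by auto
        ultimately show "\<bar>DD 0 a\<bar> \<le> \<delta> / 2" unfolding DD_def by auto
      qed
      have bar: "\<forall>t\<in>{0..T}. \<phi> t < \<delta> * exp (K * t / \<tau>)"
        by (rule barrier[OF tau K0, of T AA DD \<phi> DD' GG "\<delta>/2" \<delta>])
           (use H1 H2 H3 H4 H5 H6 init dpos in auto)
      have bnd: "\<phi> t \<le> r / 2" if "t \<in> {0..T}" for t
      proof -
        have "exp (K * t / \<tau>) \<le> C" unfolding C_def using that K0 tau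
          by (auto intro!: divide_right_mono mult_left_mono)
        then have "\<delta> * exp (K * t / \<tau>) \<le> \<delta> * C" using dpos by simp
        also have "\<delta> * C = r / 2" unfolding \<delta>_def using C0 by simp
        finally show ?thesis using bar that by fastforce
      qed
      have sup_le: "(SUP t\<in>{0..T}. \<phi> t) \<le> r / 2" using bnd z0 by (intro cSUP_least) auto
      have bdd: "bdd_above (\<phi> ` {0..T})" using bnd by (meson bdd_aboveI2)
      have sup_ge: "0 \<le> (SUP t\<in>{0..T}. \<phi> t)" using cSUP_upper2[OF bdd z0, of 0] phi0[of 0] by simp
      show "norm ((SUP t\<in>{0..T}. Xnorm p (Xsub (ul l t) (u t))) - 0) < r"
        using sup_le sup_ge r unfolding \<phi>_def by simp
    qed
  qed
qed


end
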